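(* Let $l\le m$ be integers. Then in $\wedge^{m-l+2}V_{\mathrm{aff}}$ one has $u_m\wedge u_{m-1}\wedge\cdots\wedge u_{l+1}\wedge u_l\wedge u_m=0$ and $u_l\wedge u_m\wedge u_{m-1}\wedge\cdots\wedge u_{l+1}\wedge u_l=0$.
   Context: Let $N,L\ge 1$ be integers, $q$ an indeterminate and $\mathbb K=\mathbb Q(q^{1/(2N)})$. Let $\mathbb K^L$ have basis $\mathfrak e_1,\dots,\mathfrak e_L$, $\mathbb K^N$ have basis $\mathfrak v_1,\dots,\mathfrak v_N$, and $V_{\mathrm{aff}}=\mathbb K[z^{\pm1}]\otimes\mathbb K^L\otimes\mathbb K^N$, with basis $z^m\mathfrak e_a\mathfrak v_\epsilon$. Identify $V_{\mathrm{aff}}^{\otimes n}=(\mathbb K[z^{\pm1}]\otimes\mathbb K^L)^{\otimes n}\otimes(\mathbb K^N)^{\otimes n}$, and $(\mathbb K[z^{\pm1}]\otimes\mathbb K^L)^{\otimes n}=\mathbb K[z_1^{\pm1},\dots,z_n^{\pm1}]\otimes(\mathbb K^L)^{\otimes n}$ via $z^{m_1}\mathfrak e_{a_1}\otimes\cdots\otimes z^{m_n}\mathfrak e_{a_n}\mapsto z_1^{m_1}\cdots z_n^{m_n}\otimes\mathfrak e_{a_1}\otimes\cdots\otimes\mathfrak e_{a_n}$. With $E_{a,b}$ the matrix units of $\mathbb K^L$ put $R(z_1,z_2)=(q^2z_1-z_2)\sum_{a}E_{a,a}\otimes E_{a,a}+q(z_1-z_2)\sum_{a\neq b}E_{a,a}\otimes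 E_{b,b}+z_1(q^2-1)\sum_{a<b}E_{a,b}\otimes E_{b,a}+z_2(q^2-1)\sum_{a>b}E_{a,b}\otimes E_{b,a}$, let $s$ be the operator exchanging the two tensor factors of $(\mathbb K[z^{\pm1}]\otimes\mathbb K^L)^{\otimes 2}$, and $\overset{c}{T}=\frac{z_1-q^2z_2}{z_1-z_2}\bigl(1-s\cdot\frac{R(z_1,z_2)}{q^2z_1-z_2}\bigr)-1$ (a well-defined operator on $\mathbb K[z_1^{\pm1},z_2^{\pm1}]\otimes(\mathbb K^L)^{\otimes2}$). Let $\overset{s}{T}$ on $(\mathbb K^N)^{\otimes 2}$ send $\mathfrak v_{\epsilon_1}\otimes\mathfrak v_{\epsilon_2}$ to $q^2\mathfrak v_{\epsilon_1}\otimes\mathfrak v_{\epsilon_2}$ if $\epsilon_1=\epsilon_2$, to $q\,\mathfrak v_{\epsilon_2}\otimes\mathfrak v_{\epsilon_1}$ if $\epsilon_1<\epsilon_2$, and to $q\,\mathfrak v_{\epsilon_2}\otimes\mathfrak v_{\epsilon_1}+(q^2-1)\mathfrak v_{\epsilon_1}\otimes\mathfrak v_{\epsilon_2}$ if $\epsilon_1>\epsilon_2$. For $1\le i<n$ let $\overset{c}{T}_i$ (resp. $\overset{s}{T}_i$) be $\overset{c}{T}$ (resp. $\overset{s}{T}$) acting in the $i$th and $(i+1)$st tensor factors of $(\mathbb K[z^{\pm1}]\otimes\mathbb K^L)^{\otimes n}$ (resp. $(\mathbb K^N)^{\otimes n}$), extended to $V_{\mathrm{aff}}^{\otimes n}$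 by the identity on the other factor. The ($q$-)wedge product is $\wedge^nV_{\mathrm{aff}}=V_{\mathrm{aff}}^{\otimes n}/\sum_{i=1}^{n-1}\mathrm{Im}(\overset{c}{T}_i-\overset{s}{T}_i)$, with quotient map denoted $\wedge$. Every $k\in\mathbb Z$ is written uniquely as $k=\bar k-N(\dot k+L\underline k)$ with $\bar k\in\{1,\dots,N\}$, $\dot k\in\{1,\dots,L\}$, $\underline k\in\mathbb Z$; put $u_k=z^{\underline k}\mathfrak e_{\dot k}\mathfrak v_{\bar k}$, so $\{u_k\}_{k\in\mathbb Z}$ is a basis of $V_{\mathrm{aff}}$. The wedge $u_{k_1}\wedge\cdots\wedge u_{k_n}$ is the image of $u_{k_1}\otimes\cdots\otimes u_{k_n}$; it is called normally ordered if $k_1>k_2>\cdots>k_n$. *)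

theory Defs
  imports "HOL-Computational_Algebra.Polynomial" "HOL-Computational_Algebra.Fraction_Field"
begin

(* The field K = Q(q^(1/(2N))) is modelled as Q(t) (rational functions in t),
   with q^(1/(2N)) = t and q = t^(2N). *)
type_synonym fld = "rat poly fract"

definition qroot :: fld where "qroot = Fract [:0, 1:] 1"
definition qpar :: "nat \<Rightarrow> fld" where "qpar N = qroot ^ (2 * N)"

(* Basis of V_aff^{\<otimes> n}: lists of length n of triples (m, a, eps), the j-th triple
   standing for z^m e_a v_eps in the j-th tensor factor (positions 0-based). *)
type_synonym idx = "(int \<times> nat \<times> nat) list"
type_synonym tensor = "idx \<Rightarrow> fld"

definition tsupp :: "tensor \<Rightarrow> idx set" where "tsupp v = {k. v k \<noteq> 0}"

definition valid_idx :: "nat \<Rightarrow> nat \<Rightarrow> nat \<Rightarrow> idx \<Rightarrow> bool" where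
  "valid_idx N L n k \<longleftrightarrow> length k = n \<and>
     (\<forall>j<n. case k ! j of (m, a, e) \<Rightarrow> 1 \<le> a \<and> a \<le> L \<and> 1 \<le> e \<and> e \<le> N)"

definition is_tensor :: "nat \<Rightarrow> nat \<Rightarrow> nat \<Rightarrow> tensor \<Rightarrow> bool" where
  "is_tensor N L n v \<longleftrightarrow> finite (tsupp v) \<and> (\<forall>k. v k \<noteq> 0 \<longrightarrow> valid_idx N L n k)"

definition tdelta :: "idx \<Rightarrow> tensor" where "tdelta k0 = (\<lambda>k. if k = k0 then 1 else 0)"
definition tadd :: "tensor \<Rightarrow> tensor \<Rightarrow> tensor" where "tadd v w = (\<lambda>k. v k + w k)"
definition tsub :: "tensor \<Rightarrow> tensor \<Rightarrow> tensor" where "tsub v w = (\<lambda>k. v k - w k)"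
definition smul :: "fld \<Rightarrow> tensor \<Rightarrow> tensor" where "smul c v = (\<lambda>k. c * v k)"

definition lin_ext :: "(idx \<Rightarrow> tensor) \<Rightarrow> tensor \<Rightarrow> tensor" where
  "lin_ext f v = (\<lambda>k. \<Sum>k'\<in>tsupp v. v k' * f k' k)"

definition sT_basis :: "nat \<Rightarrow> nat \<Rightarrow> idx \<Rightarrow> tensor" where
  "sT_basis N i k = (case k ! i of (m1, a1, e1) \<Rightarrow> case k ! Suc i of (m2, a2, e2) \<Rightarrow>
     (let q = qpar N; ksw = k[i := (m1, a1, e2), Suc i := (m2, a2, e1)] in
      if e1 = e2 then smul (q^2) (tdelta k)
      else if e1 < e2 then smul q (tdelta ksw)
      else tadd (smul q (tdelta ksw)) (smul (q^2 - 1) (tdelta k))))"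

definition sT :: "nat \<Rightarrow> nat \<Rightarrow> tensor \<Rightarrow> tensor" where
  "sT N i = lin_ext (sT_basis N i)"

(* multiplication by z_j (variable of the j-th factor) *)
definition zmul :: "nat \<Rightarrow> tensor \<Rightarrow> tensor" where
  "zmul j v = (\<lambda>k. if j < length k then (case k ! j of (m, a, e) \<Rightarrow> v (k[j := (m - 1, a, e)])) else 0)"

(* the flip s of the (K[z^{\<plusminus>1}] \<otimes> K^L)-parts of positions i, i+1 *)
definition sflip :: "nat \<Rightarrow> tensor \<Rightarrow> tensor" where
  "sflip i v = (\<lambda>k. if Suc i < length k then
      (case k ! i of (m1, a1, e1) \<Rightarrow> case k ! Suc i of (m2, a2, e2) \<Rightarrow>
         v (k[i := (m2, a2, e1), Suc i := (m1, a1, e2)])) else 0)"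

(* R(z_i, z_{i+1}) acting on the K^L-parts of positions i, i+1 *)
definition R_basis :: "nat \<Rightarrow> nat \<Rightarrow> idx \<Rightarrow> tensor" where
  "R_basis N i k = (case k ! i of (m1, a1, e1) \<Rightarrow> case k ! Suc i of (m2, a2, e2) \<Rightarrow>
     (let q = qpar N; d = tdelta k; kc = tdelta (k[i := (m1, a2, e1), Suc i := (m2, a1, e2)]) in
      if a1 = a2 then tsub (smul (q^2) (zmul i d)) (zmul (Suc i) d)
      else tadd (smul q (tsub (zmul i d) (zmul (Suc i) d)))
                (smul (q^2 - 1) (if a2 < a1 then zmul i kc else zmul (Suc i) kc))))"

definition Rop :: "nat \<Rightarrow> nat \<Rightarrow> tensor \<Rightarrow> tensor" where
  "Rop N i = lin_ext (R_basis N i)"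

definition dprime :: "nat \<Rightarrow> nat \<Rightarrow> tensor \<Rightarrow> tensor" where
  "dprime N i v = tsub (smul ((qpar N)^2) (zmul (Suc i) v)) (zmul i v)"

(* cT_i v = w is the (unique) w with
   (z_i - z_{i+1})(q^2 z_{i+1} - z_i)(w + v) = (z_i - q^2 z_{i+1})((q^2 z_{i+1} - z_i) v - s(R v)),
   which is the defining formula cT = (z1-q^2z2)/(z1-z2) (1 - s R/(q^2 z1 - z2)) - 1
   cleared of denominators (using s(f/g) = s f / s g). *)
definition cT :: "nat \<Rightarrow> nat \<Rightarrow> nat \<Rightarrow> nat \<Rightarrow> tensor \<Rightarrow> tensor" where
  "cT N L n i v = (THE w. is_tensor N L n w \<and>
     tsub (zmul i (dprime N i (tadd w v))) (zmul (Suc i) (dprime N i (tadd w v))) =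
     (let X = tsub (dprime N i v) (sflip i (Rop N i v)) in
        tsub (zmul i X) (smul ((qpar N)^2) (zmul (Suc i) X))))"

(* u_k = z^{underline k} e_{dot k} v_{bar k}, with k = bar k - N (dot k + L underline k) *)
definition u_idx :: "nat \<Rightarrow> nat \<Rightarrow> int \<Rightarrow> int \<times> nat \<times> nat" where
  "u_idx N L k = (THE t. case t of (mm, a, e) \<Rightarrow>
      1 \<le> a \<and> a \<le> L \<and> 1 \<le> e \<and> e \<le> N \<and> k = int e - int N * (int a + int L * mm))"

(* u_{k_1} \<wedge> ... \<wedge> u_{k_n} = 0 iff u_{k_1} \<otimes> ... \<otimes> u_{k_n} lies in
   \<Sum>_{i} Im(cT_i - sT_i)   (positions i, i+1 with 0 \<le> i < n-1) *)
definition wedge_zero :: "nat \<Rightarrow> nat \<Rightarrow> int list \<Rightarrow> bool" where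
  "wedge_zero N L ks \<longleftrightarrow> (let n = length ks in
     \<exists>x. (\<forall>i. is_tensor N L n (x i)) \<and>
       tdelta (map (u_idx N L) ks) = (\<lambda>k. \<Sum>i<n - 1. cT N L n i (x i) k - sT N i (x i) k))"

end

theory Submission
  imports Defs
begin


type_synonym tri = "int \<times> nat \<times> nat"
type_synonym t2 = "tri \<Rightarrow> tri \<Rightarrow> fld"

definition upd2 :: "nat \<Rightarrow> idx \<Rightarrow> tri \<Rightarrow> tri \<Rightarrow> idx" where
  "upd2 i k x y = k[i := x, Suc i := y]"
definition inpl :: "nat \<Rightarrow> idx \<Rightarrow> idx \<Rightarrow> bool" where
  "inpl i k k' \<longleftrightarrow> (\<exists>x y. k' = upd2 i k x y)"
definition lift :: "nat \<Rightarrow> idx \<Rightarrow> t2 \<Rightarrow> tensor" where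
  "lift i k \<phi> = (\<lambda>k'. if inpl i k k' then \<phi> (k'!i) (k'!Suc i) else 0)"

definition decp :: "tri \<Rightarrow> tri" where "decp t = (case t of (p,a,e) \<Rightarrow> (p - 1, a, e))"
definition incp :: "tri \<Rightarrow> tri" where "incp t = (case t of (p,a,e) \<Rightarrow> (p + 1, a, e))"

lemma decp_simp[simp]: "decp (p,a,e) = (p - 1, a, e)" by (simp add: decp_def)
lemma incp_simp[simp]: "incp (p,a,e) = (p + 1, a, e)" by (simp add: incp_def)
lemma decp_incp[simp]: "decp (incp t) = t" "incp (decp t) = t"
  by (cases t; auto)+
lemma decp_eq_iff: "decp x = y \<longleftrightarrow> x = incp y"
  by (cases x; cases y; auto)

definition d2 :: "tri \<Rightarrow> tri \<Rightarrow> t2" where "d2 x y = (\<lambda>a b. if a = x \<and> b = y then 1 else 0)"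
definition Z1 :: "t2 \<Rightarrow> t2" where "Z1 \<phi> = (\<lambda>a b. \<phi> (decp a) b)"
definition Z2 :: "t2 \<Rightarrow> t2" where "Z2 \<phi> = (\<lambda>a b. \<phi> a (decp b))"
definition sw1 :: "tri \<Rightarrow> tri \<Rightarrow> tri" where
  "sw1 x y = (case x of (m1,a1,e1) \<Rightarrow> case y of (m2,a2,e2) \<Rightarrow> (m2,a2,e1))"
definition sw2 :: "tri \<Rightarrow> tri \<Rightarrow> tri" where
  "sw2 x y = (case x of (m1,a1,e1) \<Rightarrow> case y of (m2,a2,e2) \<Rightarrow> (m1,a1,e2))"
definition Sw :: "t2 \<Rightarrow> t2" where "Sw \<phi> = (\<lambda>a b. \<phi> (sw1 a b) (sw2 a b))"
definition add2 :: "t2 \<Rightarrow> t2 \<Rightarrow> t2" where "add2 \<phi> \<psi> = (\<lambda>a b. \<phi> a b + \<psi> a b)"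
definition sub2 :: "t2 \<Rightarrow> t2 \<Rightarrow> t2" where "sub2 \<phi> \<psi> = (\<lambda>a b. \<phi> a b - \<psi> a b)"
definition sm2 :: "fld \<Rightarrow> t2 \<Rightarrow> t2" where "sm2 c \<phi> = (\<lambda>a b. c * \<phi> a b)"

lemma sw_simp[simp]: "sw1 (m1,a1,e1) (m2,a2,e2) = (m2,a2,e1)" "sw2 (m1,a1,e1) (m2,a2,e2) = (m1,a1,e2)"
  by (simp_all add: sw1_def sw2_def)

lemma upd2_len[simp]: "length (upd2 i k x y) = length k" by (simp add: upd2_def)
lemma upd2_nth1[simp]: "Suc i < length k \<Longrightarrow> upd2 i k x y ! i = x" by (simp add: upd2_def)
lemma upd2_nth2[simp]: "Suc i < length k \<Longrightarrow> upd2 i k x y ! Suc i = y" by (simp add: upd2_def)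
lemma upd2_upd2[simp]: "upd2 i (upd2 i k x y) x' y' = upd2 i k x' y'"
  by (simp add: upd2_def list_update_swap)
lemma upd2_upd_i[simp]: "(upd2 i k x y)[i := w] = upd2 i k w y"
  unfolding upd2_def by (metis list_update_overwrite list_update_swap n_not_Suc_n)
lemma upd2_upd_si[simp]: "(upd2 i k x y)[Suc i := w] = upd2 i k x w"
  unfolding upd2_def by simp
lemma upd2_self: "Suc i < length k \<Longrightarrow> upd2 i k (k!i) (k!Suc i) = k" by (simp add: upd2_def)
lemma upd2_inj[simp]: "Suc i < length k \<Longrightarrow> upd2 i k x y = upd2 i k x' y' \<longleftrightarrow> x = x' \<and> y = y'"
  by (metis upd2_nth1 upd2_nth2)

lemma inpl_upd2[simp]: "inpl i k (upd2 i k x y)" unfolding inpl_def by blast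
lemma inpl_base[simp]: "inpl i (upd2 i k x y) k' = inpl i k k'"
  by (auto simp: inpl_def)
lemma lift_base[simp]: "lift i (upd2 i k x y) = lift i k"
  by (simp add: lift_def fun_eq_iff)
lemma lift_upd2[simp]: "Suc i < length k \<Longrightarrow> lift i k \<phi> (upd2 i k x y) = \<phi> x y"
  by (simp add: lift_def)
lemma lift_out: "\<not> inpl i k k' \<Longrightarrow> lift i k \<phi> k' = 0"
  by (simp add: lift_def)
lemma lift_cases:
  assumes "Suc i < length k"
  obtains x y where "k' = upd2 i k x y" "lift i k \<phi> k' = \<phi> x y" | "\<not> inpl i k k'" "lift i k \<phi> k' = 0"
proof (cases "inpl i k k'")
  case True
  then obtain x y where "k' = upd2 i k x y" unfolding inpl_def by blast
  then show ?thesis using that(1)[of x y] assms by simp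
next
  case False then show ?thesis using that(2) by (simp add: lift_out)
qed

lemma lift_eqI: "(\<And>x y. \<phi> x y = \<psi> x y) \<Longrightarrow> lift i k \<phi> = lift i k \<psi>"
  by (rule ext) (simp add: lift_def)

lemma tdelta_lift: "Suc i < length k \<Longrightarrow> tdelta (upd2 i k x y) = lift i k (d2 x y)"
proof
  fix k' assume a: "Suc i < length k"
  show "tdelta (upd2 i k x y) k' = lift i k (d2 x y) k'"
    by (rule lift_cases[OF a, of k' "d2 x y"]) (auto simp: tdelta_def d2_def a inpl_def)
qed
lemma tdelta_lift0: "Suc i < length k \<Longrightarrow> tdelta k = lift i k (d2 (k!i) (k!Suc i))"
  using tdelta_lift[of i k "k!i" "k!Suc i"] by (simp add: upd2_self)

lemma tadd_lift: "tadd (lift i k \<phi>) (lift i k \<psi>) = lift i k (add2 \<phi> \<psi>)"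
  by (auto simp: tadd_def lift_def add2_def fun_eq_iff)
lemma tsub_lift: "tsub (lift i k \<phi>) (lift i k \<psi>) = lift i k (sub2 \<phi> \<psi>)"
  by (auto simp: tsub_def lift_def sub2_def fun_eq_iff)
lemma smul_lift: "smul c (lift i k \<phi>) = lift i k (sm2 c \<phi>)"
  by (auto simp: smul_def lift_def sm2_def fun_eq_iff)

lemma upd_not_inpl:
  assumes "Suc i < length k" "\<not> inpl i k k'" "j = i \<or> j = Suc i" "j < length k'"
  shows "\<not> inpl i k (k'[j := z])"
proof
  assume "inpl i k (k'[j := z])"
  then obtain x y where e: "k'[j := z] = upd2 i k x y" by (auto simp: inpl_def)
  have "k' = (k'[j := z])[j := k'!j]" using assms(4) by simp
  also have "\<dots> = upd2 i k (if j = i then k'!j else x) (if j = i then y else k'!j)"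
    using e assms(3) by auto
  finally show False using assms(2) unfolding inpl_def by blast
qed

lemma zmul1_lift: assumes "Suc i < length k" shows "zmul i (lift i k \<phi>) = lift i k (Z1 \<phi>)"
proof
  fix k'
  show "zmul i (lift i k \<phi>) k' = lift i k (Z1 \<phi>) k'"
  proof (cases "inpl i k k'")
    case True
    then obtain x y where k': "k' = upd2 i k x y" by (auto simp: inpl_def)
    obtain m a e where x: "x = (m,a,e)" by (cases x) auto
    have "k'[i := (m - 1, a, e)] = upd2 i k (decp x) y" using k' x
      by (simp add: upd2_def list_update_swap)
    then show ?thesis using k' x assms by (simp add: zmul_def Z1_def)
  next
    case False
    then show ?thesis using assms upd_not_inpl[OF assms False]
      by (auto simp: zmul_def lift_out split: prod.splits)
  qed
qed

lemma zmul2_lift: assumes "Suc i < length k" shows "zmul (Suc i) (lift i k \<phi>) = lift i k (Z2 \<phi>)"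
proof
  fix k'
  show "zmul (Suc i) (lift i k \<phi>) k' = lift i k (Z2 \<phi>) k'"
  proof (cases "inpl i k k'")
    case True
    then obtain x y where k': "k' = upd2 i k x y" by (auto simp: inpl_def)
    obtain m a e where y: "y = (m,a,e)" by (cases y) auto
    have "k'[Suc i := (m - 1, a, e)] = upd2 i k x (decp y)" using k' y
      by (simp add: upd2_def list_update_swap)
    then show ?thesis using k' y assms by (simp add: zmul_def Z2_def)
  next
    case False
    then show ?thesis using assms upd_not_inpl[OF assms False]
      by (auto simp: zmul_def lift_out split: prod.splits)
  qed
qed

lemma sflip_lift: assumes "Suc i < length k" shows "sflip i (lift i k \<phi>) = lift i k (Sw \<phi>)"
proof
  fix k'
  show "sflip i (lift i k \<phi>) k' = lift i k (Sw \<phi>) k'"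
  proof (cases "inpl i k k'")
    case True
    then obtain x y where k': "k' = upd2 i k x y" by (auto simp: inpl_def)
    obtain m a e where x: "x = (m,a,e)" by (cases x) auto
    obtain m' a' e' where y: "y = (m',a',e')" by (cases y) auto
    have "k'[i := (m', a', e), Suc i := (m, a, e')] = upd2 i k (sw1 x y) (sw2 x y)" using k' x y
      by (simp add: upd2_def list_update_swap)
    then show ?thesis using k' x y assms by (simp add: sflip_def Sw_def)
  next
    case False
    have "\<not> inpl i k (k'[i := z, Suc i := z'])" if "Suc i < length k'" for z z'
      using upd_not_inpl[OF assms upd_not_inpl[OF assms False, of i z], of "Suc i" z'] that by auto
    then show ?thesis using assms False
      by (auto simp: sflip_def lift_out split: prod.splits)
  qed
qed

lemma Z1_d2[simp]: "Z1 (d2 x y) = d2 (incp x) y"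
  by (auto simp: Z1_def d2_def fun_eq_iff decp_eq_iff)
lemma Z2_d2[simp]: "Z2 (d2 x y) = d2 x (incp y)"
  by (auto simp: Z2_def d2_def fun_eq_iff decp_eq_iff)
lemma Sw_d2[simp]: "Sw (d2 x y) = d2 (sw1 x y) (sw2 x y)"
  by (cases x; cases y; auto simp: Sw_def d2_def fun_eq_iff sw1_def sw2_def split: prod.splits)



definition R2 :: "nat \<Rightarrow> tri \<Rightarrow> tri \<Rightarrow> t2" where
  "R2 N t1 t2 = (case t1 of (m1,a1,e1) \<Rightarrow> case t2 of (m2,a2,e2) \<Rightarrow>
     (let q = qpar N; d = d2 t1 t2; kc = d2 (m1,a2,e1) (m2,a1,e2) in
      if a1 = a2 then sub2 (sm2 (q^2) (Z1 d)) (Z2 d)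
      else add2 (sm2 q (sub2 (Z1 d) (Z2 d))) (sm2 (q^2 - 1) (if a2 < a1 then Z1 kc else Z2 kc))))"

definition S2 :: "nat \<Rightarrow> tri \<Rightarrow> tri \<Rightarrow> t2" where
  "S2 N t1 t2 = (case t1 of (m1,a1,e1) \<Rightarrow> case t2 of (m2,a2,e2) \<Rightarrow>
     (let q = qpar N; ksw = d2 (m1,a1,e2) (m2,a2,e1) in
      if e1 = e2 then sm2 (q^2) (d2 t1 t2)
      else if e1 < e2 then sm2 q ksw
      else add2 (sm2 q ksw) (sm2 (q^2 - 1) (d2 t1 t2))))"

lemma R_basis_lift:
  assumes "Suc i < length k"
  shows "R_basis N i k = lift i k (R2 N (k!i) (k!Suc i))"
proof -
  obtain m1 a1 e1 where 1: "k!i = (m1,a1,e1)" by (cases "k!i") auto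
  obtain m2 a2 e2 where 2: "k!Suc i = (m2,a2,e2)" by (cases "k!Suc i") auto
  have kc: "k[i := (m1,a2,e1), Suc i := (m2,a1,e2)] = upd2 i k (m1,a2,e1) (m2,a1,e2)"
    by (simp add: upd2_def)
  have d: "tdelta k = lift i k (d2 (m1,a1,e1) (m2,a2,e2))" using tdelta_lift0[OF assms] 1 2 by simp
  have dc: "tdelta (upd2 i k (m1,a2,e1) (m2,a1,e2)) = lift i k (d2 (m1,a2,e1) (m2,a1,e2))"
    using tdelta_lift[OF assms] by simp
  show ?thesis
  proof (cases "a1 = a2")
    case True
    then show ?thesis unfolding R_basis_def R2_def 1 2 kc Let_def d dc prod.case
      by (simp add: zmul1_lift[OF assms] zmul2_lift[OF assms] tsub_lift tadd_lift smul_lift)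
  next
    case False
    then show ?thesis unfolding R_basis_def R2_def 1 2 kc Let_def d dc prod.case
      by (cases "a2 < a1") (simp_all add: zmul1_lift[OF assms] zmul2_lift[OF assms] tsub_lift tadd_lift smul_lift)
  qed
qed

lemma sT_basis_lift:
  assumes "Suc i < length k"
  shows "sT_basis N i k = lift i k (S2 N (k!i) (k!Suc i))"
proof -
  obtain m1 a1 e1 where 1: "k!i = (m1,a1,e1)" by (cases "k!i") auto
  obtain m2 a2 e2 where 2: "k!Suc i = (m2,a2,e2)" by (cases "k!Suc i") auto
  have kc: "k[i := (m1,a1,e2), Suc i := (m2,a2,e1)] = upd2 i k (m1,a1,e2) (m2,a2,e1)"
    by (simp add: upd2_def)
  have d: "tdelta k = lift i k (d2 (m1,a1,e1) (m2,a2,e2))" using tdelta_lift0[OF assms] 1 2 by simp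
  have dc: "tdelta (upd2 i k (m1,a1,e2) (m2,a2,e1)) = lift i k (d2 (m1,a1,e2) (m2,a2,e1))"
    using tdelta_lift[OF assms] by simp
  show ?thesis unfolding sT_basis_def S2_def 1 2 kc Let_def d dc prod.case
    by (simp add: tadd_lift smul_lift)
qed

definition ddv :: "int \<Rightarrow> int \<Rightarrow> int \<Rightarrow> fld" where
  "ddv p1 p2 j = (if p2 \<le> j \<and> j < p1 then 1 else if p1 \<le> j \<and> j < p2 then -1 else 0)"
definition dd2 :: "tri \<Rightarrow> tri \<Rightarrow> t2" where
  "dd2 t1 t2 = (\<lambda>x y. if snd x = snd t1 \<and> snd y = snd t2 \<and> fst x + fst y = fst t1 + fst t2 - 1
      then ddv (fst t1) (fst t2) (fst x) else 0)"

lemma ddv_tel: "ddv p1 p2 (j - 1) - ddv p1 p2 j = (if j = p1 then 1 else 0) - (if j = p2 then 1 else 0)"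
  by (simp add: ddv_def)
lemma dd2_tel:
  "dd2 t1 t2 (decp x) y - dd2 t1 t2 x (decp y) = d2 t1 t2 x y - d2 (fst t2, snd t1) (fst t1, snd t2) x y"
proof -
  obtain p1 r1 where t1: "t1 = (p1, r1)" by (cases t1)
  obtain p2 r2 where t2: "t2 = (p2, r2)" by (cases t2)
  obtain xp xr where x: "x = (xp, xr)" by (cases x)
  obtain yp yr where y: "y = (yp, yr)" by (cases y)
  have dx: "decp (xp, xr) = (xp - 1, xr)" by (cases xr) auto
  have dy: "decp (yp, yr) = (yp - 1, yr)" by (cases yr) auto
  have L: "dd2 t1 t2 (decp x) y - dd2 t1 t2 x (decp y) = (if xr = r1 \<and> yr = r2 \<and> xp + yp = p1 + p2 then
      ddv p1 p2 (xp - 1) - ddv p1 p2 xp else 0)"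
    unfolding t1 t2 x y dd2_def dx dy fst_conv snd_conv by auto
  have R: "d2 t1 t2 x y - d2 (fst t2, snd t1) (fst t1, snd t2) x y = (if xr = r1 \<and> yr = r2 \<and> xp + yp = p1 + p2 then
      (if xp = p1 then 1 else 0) - (if xp = p2 then 1 else 0) else 0)"
    unfolding t1 t2 x y d2_def fst_conv snd_conv by auto
  show ?thesis unfolding L R ddv_tel ..
qed

lemma dd2_shift: "dd2 t1 t2 (decp x) y = dd2 t1 t2 x (decp y) + d2 t1 t2 x y - d2 (fst t2, snd t1) (fst t1, snd t2) x y"
  using dd2_tel[of t1 t2 x y] by (simp add: algebra_simps)
lemma d2_dec1: "d2 a b (decp x) y = d2 (incp a) b x y"
  by (simp add: d2_def decp_eq_iff)
lemma d2_dec2: "d2 a b x (decp y) = d2 a (incp b) x y"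
  by (simp add: d2_def decp_eq_iff)
lemma sw_inv: "sw1 (sw1 x y) (sw2 x y) = x" "sw2 (sw1 x y) (sw2 x y) = y"
  by (cases x; cases y; simp)+
lemma d2_sw: "d2 a b (sw1 x y) (sw2 x y) = d2 (sw1 a b) (sw2 a b) x y"
  unfolding d2_def by (metis sw_inv)

definition C2 :: "nat \<Rightarrow> tri \<Rightarrow> tri \<Rightarrow> t2" where
  "C2 N t1 t2 = (case t1 of (p1,a1,e1) \<Rightarrow> case t2 of (p2,a2,e2) \<Rightarrow>
     (let q = qpar N in
      if a1 = a2 then sub2 (sub2 (Z1 (dd2 t1 t2)) (sm2 (q^2) (Z2 (dd2 t1 t2)))) (d2 t1 t2)
      else sub2 (sm2 (-q) (d2 (p2,a2,e1) (p1,a1,e2)))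
                (sm2 (q^2 - 1) (if a2 < a1 then Z2 (dd2 t1 t2) else dd2 t1 (p2+1,a2,e2)))))"

definition D2 :: "nat \<Rightarrow> t2 \<Rightarrow> t2" where "D2 N \<phi> = sub2 (sm2 ((qpar N)^2) (Z2 \<phi>)) (Z1 \<phi>)"

lemma claimA2:
  "sub2 (Z1 (add2 (C2 N t1 t2) (d2 t1 t2))) (Z2 (add2 (C2 N t1 t2) (d2 t1 t2)))
   = sub2 (Sw (R2 N t1 t2)) (D2 N (d2 t1 t2))"
proof (intro ext)
  fix x y
  obtain p1 a1 e1 where t1: "t1 = (p1,a1,e1)" by (cases t1) auto
  obtain p2 a2 e2 where t2: "t2 = (p2,a2,e2)" by (cases t2) auto
  show "sub2 (Z1 (add2 (C2 N t1 t2) (d2 t1 t2))) (Z2 (add2 (C2 N t1 t2) (d2 t1 t2))) x y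
   = sub2 (Sw (R2 N t1 t2)) (D2 N (d2 t1 t2)) x y"
  proof (cases "a1 = a2")
    case True
    show ?thesis unfolding t1 t2 C2_def R2_def D2_def Let_def using True
      by (simp add: sub2_def add2_def sm2_def Z1_def Z2_def Sw_def dd2_shift d2_dec1 d2_dec2 d2_sw
          algebra_simps)
  next
    case False
    show ?thesis unfolding t1 t2 C2_def R2_def D2_def Let_def using False
      by (simp add: sub2_def add2_def sm2_def Z1_def Z2_def Sw_def dd2_shift d2_dec1 d2_dec2 d2_sw
          algebra_simps)
  qed
qed



lemma zmul_alt: "zmul j f k = (if j < length k then f (k[j := decp (k!j)]) else 0)"
  by (cases "k!j") (simp add: zmul_def)

lemma zmul_tadd: "zmul j (tadd a b) = tadd (zmul j a) (zmul j b)"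
  by (auto simp: zmul_alt tadd_def fun_eq_iff)
lemma zmul_tsub: "zmul j (tsub a b) = tsub (zmul j a) (zmul j b)"
  by (auto simp: zmul_alt tsub_def fun_eq_iff)
lemma zmul_smul: "zmul j (smul c a) = smul c (zmul j a)"
  by (auto simp: zmul_alt smul_def fun_eq_iff)
lemma zmul_comm: assumes "i \<noteq> j" shows "zmul i (zmul j f) = zmul j (zmul i f)"
proof
  fix k
  show "zmul i (zmul j f) k = zmul j (zmul i f) k"
    using assms by (simp add: zmul_alt list_update_swap)
qed

lemma sflip_alt: "sflip i f k = (if Suc i < length k then f (k[i := sw1 (k!i) (k!Suc i), Suc i := sw2 (k!i) (k!Suc i)]) else 0)"
  by (cases "k!i"; cases "k!Suc i") (simp add: sflip_def)
lemma sflip_tadd: "sflip i (tadd a b) = tadd (sflip i a) (sflip i b)"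
  by (auto simp: sflip_alt tadd_def fun_eq_iff)
lemma sflip_tsub: "sflip i (tsub a b) = tsub (sflip i a) (sflip i b)"
  by (auto simp: sflip_alt tsub_def fun_eq_iff)
lemma sflip_smul: "sflip i (smul c a) = smul c (sflip i a)"
  by (auto simp: sflip_alt smul_def fun_eq_iff)

lemma dprime_tadd: "dprime N i (tadd a b) = tadd (dprime N i a) (dprime N i b)"
  by (auto simp: dprime_def zmul_alt tadd_def tsub_def smul_def fun_eq_iff algebra_simps)
lemma dprime_tsub: "dprime N i (tsub a b) = tsub (dprime N i a) (dprime N i b)"
  by (auto simp: dprime_def zmul_alt tadd_def tsub_def smul_def fun_eq_iff algebra_simps)
lemma dprime_smul: "dprime N i (smul c a) = smul c (dprime N i a)"
  by (auto simp: dprime_def zmul_alt tsub_def smul_def fun_eq_iff algebra_simps)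

lemma lin_ext_superset:
  assumes "finite S" "tsupp v \<subseteq> S"
  shows "lin_ext f v k = (\<Sum>x\<in>S. v x * f x k)"
  unfolding lin_ext_def
  by (rule sum.mono_neutral_left) (use assms in \<open>auto simp: tsupp_def\<close>)

lemma tsupp_tadd: "tsupp (tadd a b) \<subseteq> tsupp a \<union> tsupp b"
  by (auto simp: tsupp_def tadd_def)
lemma tsupp_tsub: "tsupp (tsub a b) \<subseteq> tsupp a \<union> tsupp b"
  by (auto simp: tsupp_def tsub_def)
lemma tsupp_smul: "tsupp (smul c a) \<subseteq> tsupp a"
  by (auto simp: tsupp_def smul_def)

lemma lin_ext_tadd:
  assumes "finite (tsupp a)" "finite (tsupp b)"
  shows "lin_ext f (tadd a b) = tadd (lin_ext f a) (lin_ext f b)"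
proof
  fix k
  let ?S = "tsupp a \<union> tsupp b"
  have "lin_ext f (tadd a b) k = (\<Sum>x\<in>?S. tadd a b x * f x k)"
    by (rule lin_ext_superset) (use assms tsupp_tadd in auto)
  also have "\<dots> = (\<Sum>x\<in>?S. a x * f x k) + (\<Sum>x\<in>?S. b x * f x k)"
    by (simp add: tadd_def algebra_simps sum.distrib)
  also have "\<dots> = lin_ext f a k + lin_ext f b k"
    using lin_ext_superset[of ?S a f k] lin_ext_superset[of ?S b f k] assms by auto
  finally show "lin_ext f (tadd a b) k = tadd (lin_ext f a) (lin_ext f b) k" by (simp add: tadd_def)
qed

lemma lin_ext_smul:
  assumes "finite (tsupp a)"
  shows "lin_ext f (smul c a) = smul c (lin_ext f a)"
proof
  fix k
  have "lin_ext f (smul c a) k = (\<Sum>x\<in>tsupp a. smul c a x * f x k)"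
    by (rule lin_ext_superset) (use assms tsupp_smul in auto)
  also have "\<dots> = c * lin_ext f a k"
    by (simp add: lin_ext_def smul_def sum_distrib_left algebra_simps)
  finally show "lin_ext f (smul c a) k = smul c (lin_ext f a) k" by (simp add: smul_def)
qed

lemma tsupp_tdelta[simp]: "tsupp (tdelta k) = {k}"
  by (auto simp: tsupp_def tdelta_def)
lemma lin_ext_tdelta[simp]: "lin_ext f (tdelta k) = f k"
  unfolding lin_ext_def tsupp_tdelta by (simp add: tdelta_def)
lemma lin_ext_zero[simp]: "lin_ext f (\<lambda>_. 0) = (\<lambda>_. 0)"
  by (simp add: lin_ext_def tsupp_def fun_eq_iff)

section \<open>The defining equation of cT\<close>

definition EQ :: "nat \<Rightarrow> nat \<Rightarrow> tensor \<Rightarrow> tensor \<Rightarrow> bool" where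
  "EQ N i w v \<longleftrightarrow> tsub (zmul i (dprime N i (tadd w v))) (zmul (Suc i) (dprime N i (tadd w v))) =
     (let X = tsub (dprime N i v) (sflip i (Rop N i v)) in
        tsub (zmul i X) (smul ((qpar N)^2) (zmul (Suc i) X)))"

lemma cT_EQ: "cT N L n i v = (THE w. is_tensor N L n w \<and> EQ N i w v)"
  unfolding cT_def EQ_def ..

lemma EQ_from_Q:
  assumes "tsub (zmul i Q) (zmul (Suc i) Q) = tsub (sflip i (Rop N i v)) (dprime N i v)"
    and "Q = tadd w v"
  shows "EQ N i w v"
proof -
  define H where "H = tsub (sflip i (Rop N i v)) (dprime N i v)"
  let ?H = H
  let ?q = "(qpar N)^2"
  have c: "zmul i (zmul (Suc i) Q) = zmul (Suc i) (zmul i Q)" by (rule zmul_comm) simp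
  have e1': "tsub (zmul i (zmul i Q)) (zmul i (zmul (Suc i) Q)) = zmul i ?H"
    using arg_cong[OF assms(1), of "zmul i"] by (simp only: zmul_tsub H_def)
  have e2': "tsub (zmul (Suc i) (zmul i Q)) (zmul (Suc i) (zmul (Suc i) Q)) = zmul (Suc i) ?H"
    using arg_cong[OF assms(1), of "zmul (Suc i)"] by (simp only: zmul_tsub H_def)
  have e1: "zmul i (zmul i Q) k - zmul i (zmul (Suc i) Q) k = zmul i ?H k" for k
    using fun_cong[OF e1', of k] by (simp only: tsub_def)
  have e2: "zmul (Suc i) (zmul i Q) k - zmul (Suc i) (zmul (Suc i) Q) k = zmul (Suc i) ?H k" for k
    using fun_cong[OF e2', of k] by (simp only: tsub_def)
  have X: "tsub (dprime N i v) (sflip i (Rop N i v)) = smul (-1) ?H"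
    by (simp add: H_def tsub_def smul_def fun_eq_iff)
  show ?thesis
    unfolding EQ_def Let_def X zmul_smul assms(2)[symmetric]
  proof
    fix k
    show "tsub (zmul i (dprime N i Q)) (zmul (Suc i) (dprime N i Q)) k =
      tsub (smul (- 1) (zmul i ?H)) (smul ?q (smul (- 1) (zmul (Suc i) ?H))) k"
      unfolding dprime_def zmul_tsub zmul_smul c
      using e1[of k, unfolded c] e2[of k]
      by (simp add: tsub_def smul_def algebra_simps)
  qed
qed

section \<open>Uniqueness\<close>

definition sh :: "nat \<Rightarrow> idx \<Rightarrow> idx" where
  "sh i k = k[i := incp (k!i), Suc i := decp (k!Suc i)]"

lemma sh_len[simp]: "length (sh i k) = length k" by (simp add: sh_def)
lemma shpow_len[simp]: "length ((sh i ^^ t) k) = length k" by (induction t) auto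
lemma shpow_fst: "Suc i < length k \<Longrightarrow> fst (((sh i ^^ t) k) ! i) = fst (k!i) + int t"
proof (induction t)
  case 0 then show ?case by simp
next
  case (Suc t)
  have e: "(sh i ^^ Suc t) k = sh i ((sh i ^^ t) k)" by simp
  obtain p a e where pe: "((sh i ^^ t) k) ! i = (p,a,e)" by (cases "((sh i ^^ t) k) ! i")
  have "fst ((sh i ((sh i ^^ t) k)) ! i) = p + 1" using Suc.prems pe by (simp add: sh_def)
  then show ?case unfolding e using Suc pe by simp
qed

lemma zero_from_shift:
  assumes fin: "finite (tsupp g)" and len: "\<And>k. g k \<noteq> 0 \<Longrightarrow> length k = n" and i: "Suc i < n"
    and rec: "\<And>k. length k = n \<Longrightarrow> g k = c * g (sh i k)"
  shows "g = (\<lambda>_. 0)"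
proof
  fix k
  show "g k = 0"
  proof (rule ccontr)
    assume nz: "g k \<noteq> 0"
    then have lk: "length k = n" by (rule len)
    have pw: "g k = c^t * g ((sh i ^^ t) k)" for t
    proof (induction t)
      case 0 then show ?case by simp
    next
      case (Suc t)
      have "g ((sh i ^^ t) k) = c * g ((sh i ^^ Suc t) k)" using rec[of "(sh i ^^ t) k"] lk by simp
      then show ?case using Suc by simp
    qed
    have "range (\<lambda>t. (sh i ^^ t) k) \<subseteq> tsupp g"
    proof
      fix x assume "x \<in> range (\<lambda>t. (sh i ^^ t) k)"
      then obtain t where x: "x = (sh i ^^ t) k" by blast
      have "g x \<noteq> 0" using pw[of t] nz x by auto
      then show "x \<in> tsupp g" by (simp add: tsupp_def)
    qed
    moreover have "inj (\<lambda>t. (sh i ^^ t) k)"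
    proof (rule injI)
      fix s t assume "(sh i ^^ s) k = (sh i ^^ t) k"
      then have "fst (((sh i ^^ s) k) ! i) = fst (((sh i ^^ t) k) ! i)" by simp
      then show "s = t" using shpow_fst[of i k] i lk by simp
    qed
    ultimately have "infinite (tsupp g)"
      using finite_subset range_inj_infinite by blast
    then show False using fin by simp
  qed
qed

lemma tsupp_zmul: "tsupp (zmul j f) \<subseteq> (\<lambda>k. k[j := incp (k!j)]) ` tsupp f"
proof
  fix k assume "k \<in> tsupp (zmul j f)"
  then have j: "j < length k" and nz: "f (k[j := decp (k!j)]) \<noteq> 0"
    by (auto simp: tsupp_def zmul_alt split: if_splits)
  have "k = (k[j := decp (k!j)])[j := incp ((k[j := decp (k!j)])!j)]" using j by simp
  then show "k \<in> (\<lambda>k. k[j := incp (k!j)]) ` tsupp f" using nz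
    by (intro image_eqI[where x = "k[j := decp (k!j)]"]) (auto simp: tsupp_def)
qed

lemma fin_zmul: "finite (tsupp f) \<Longrightarrow> finite (tsupp (zmul j f))"
  using tsupp_zmul finite_subset by blast
lemma len_zmul: assumes "\<And>k. f k \<noteq> 0 \<Longrightarrow> length k = n" "zmul j f k \<noteq> 0" shows "length k = n"
  using assms(2) assms(1)[of "k[j := decp (k!j)]"] by (auto simp: zmul_alt split: if_splits)

lemma fin_tsub: "finite (tsupp a) \<Longrightarrow> finite (tsupp b) \<Longrightarrow> finite (tsupp (tsub a b))"
  using tsupp_tsub finite_subset by (metis finite_Un)
lemma fin_tadd: "finite (tsupp a) \<Longrightarrow> finite (tsupp b) \<Longrightarrow> finite (tsupp (tadd a b))"
  using tsupp_tadd finite_subset by (metis finite_Un)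
lemma fin_smul: "finite (tsupp a) \<Longrightarrow> finite (tsupp (smul c a))"
  using tsupp_smul finite_subset by blast

lemma shift_point:
  assumes "Suc i < length k"
  shows "(k[i := incp (k!i)])[i := decp ((k[i := incp (k!i)])!i)] = k"
    and "(k[i := incp (k!i)])[Suc i := decp ((k[i := incp (k!i)])!Suc i)] = sh i k"
  using assms by (simp_all add: sh_def)

lemma inj_op1:
  assumes fin: "finite (tsupp h)" and len: "\<And>k. h k \<noteq> 0 \<Longrightarrow> length k = n" and i: "Suc i < n"
    and z: "\<And>k. zmul i h k - zmul (Suc i) h k = 0"
  shows "h = (\<lambda>_. 0)"
proof (rule zero_from_shift[OF fin len i])
  fix k :: idx assume lk: "length k = n"
  have "zmul i h (k[i := incp (k!i)]) - zmul (Suc i) h (k[i := incp (k!i)]) = 0" by (rule z)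
  then show "h k = 1 * h (sh i k)" using lk i
    by (simp add: zmul_alt sh_def)
qed

lemma inj_op2:
  assumes fin: "finite (tsupp g)" and len: "\<And>k. g k \<noteq> 0 \<Longrightarrow> length k = n" and i: "Suc i < n"
    and z: "dprime N i g = (\<lambda>_. 0)"
  shows "g = (\<lambda>_. 0)"
proof (rule zero_from_shift[OF fin len i])
  fix k :: idx assume lk: "length k = n"
  have "dprime N i g (k[i := incp (k!i)]) = 0" using z by simp
  then show "g k = (qpar N)^2 * g (sh i k)" using lk i
    by (simp add: dprime_def tsub_def smul_def zmul_alt sh_def)
qed

lemma is_tensor_len: "is_tensor N L n v \<Longrightarrow> v k \<noteq> 0 \<Longrightarrow> length k = n"
  by (auto simp: is_tensor_def valid_idx_def)

lemma EQ_unique: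
  assumes "is_tensor N L n w1" "is_tensor N L n w2" "EQ N i w1 v" "EQ N i w2 v" "Suc i < n"
  shows "w1 = w2"
proof -
  let ?g = "tsub w1 w2"
  have "finite (tsupp w1)" "finite (tsupp w2)" using assms(1,2) by (auto simp: is_tensor_def)
  then have fg: "finite (tsupp ?g)" by (rule fin_tsub)
  have lg: "length k = n" if "?g k \<noteq> 0" for k
    using that is_tensor_len[OF assms(1)] is_tensor_len[OF assms(2)] by (force simp: tsub_def)
  let ?h = "dprime N i ?g"
  have fh: "finite (tsupp ?h)" unfolding dprime_def
    by (rule fin_tsub[OF fin_smul[OF fin_zmul[OF fg]] fin_zmul[OF fg]])
  have lh: "length k = n" if "?h k \<noteq> 0" for k
  proof -
    have "zmul (Suc i) ?g k \<noteq> 0 \<or> zmul i ?g k \<noteq> 0" using that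
      by (auto simp: dprime_def tsub_def smul_def)
    then show ?thesis using len_zmul[of ?g n, OF lg] by blast
  qed
  have eqL: "tsub (zmul i (dprime N i (tadd w1 v))) (zmul (Suc i) (dprime N i (tadd w1 v))) =
             tsub (zmul i (dprime N i (tadd w2 v))) (zmul (Suc i) (dprime N i (tadd w2 v)))"
    using assms(3,4) unfolding EQ_def by simp
  have dd: "dprime N i (tadd w1 v) = tadd (dprime N i (tadd w2 v)) ?h"
    by (auto simp: dprime_def zmul_alt tadd_def tsub_def smul_def fun_eq_iff algebra_simps)
  have "zmul i ?h k - zmul (Suc i) ?h k = 0" for k
    using fun_cong[OF eqL, of k] unfolding dd zmul_tadd by (simp add: tsub_def tadd_def)
  then have "?h = (\<lambda>_. 0)" using inj_op1[OF fh lh assms(5)] by blast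
  then have "?g = (\<lambda>_. 0)" using inj_op2[OF fg lg assms(5)] by blast
  then show ?thesis by (simp add: tsub_def fun_eq_iff)
qed

lemma cT_eqI:
  assumes "is_tensor N L n w" "EQ N i w v" "Suc i < n"
  shows "cT N L n i v = w"
  unfolding cT_EQ
  by (rule the_equality) (use assms EQ_unique in blast)+



definition vt :: "nat \<Rightarrow> nat \<Rightarrow> tri \<Rightarrow> bool" where
  "vt N L t = (case t of (m, a, e) \<Rightarrow> 1 \<le> a \<and> a \<le> L \<and> 1 \<le> e \<and> e \<le> N)"

lemma valid_idx_vt: "valid_idx N L n k \<longleftrightarrow> length k = n \<and> (\<forall>j<n. vt N L (k!j))"
  unfolding valid_idx_def vt_def ..

lemma vt_simp: "vt N L (p,a,e) \<longleftrightarrow> 1 \<le> a \<and> a \<le> L \<and> 1 \<le> e \<and> e \<le> N"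
  by (simp add: vt_def)
lemma vt_incp[simp]: "vt N L (incp x) = vt N L x" and vt_decp[simp]: "vt N L (decp x) = vt N L x"
  by (cases x; simp add: vt_def)+

definition supp2 :: "t2 \<Rightarrow> (tri \<times> tri) set" where "supp2 \<phi> = {(x,y). \<phi> x y \<noteq> 0}"
definition good2 :: "nat \<Rightarrow> nat \<Rightarrow> t2 \<Rightarrow> bool" where
  "good2 N L \<phi> \<longleftrightarrow> finite (supp2 \<phi>) \<and> (\<forall>x y. \<phi> x y \<noteq> 0 \<longrightarrow> vt N L x \<and> vt N L y)"

lemma good2I:
  assumes "supp2 \<phi> \<subseteq> S" "finite S" "\<And>x y. \<phi> x y \<noteq> 0 \<Longrightarrow> vt N L x \<and> vt N L y"
  shows "good2 N L \<phi>"
  using assms finite_subset unfolding good2_def by blast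

lemma good2D: "good2 N L \<phi> \<Longrightarrow> \<phi> x y \<noteq> 0 \<Longrightarrow> vt N L x \<and> vt N L y"
  and good2F: "good2 N L \<phi> \<Longrightarrow> finite (supp2 \<phi>)"
  unfolding good2_def by blast+

lemma good2_d2: "vt N L x \<Longrightarrow> vt N L y \<Longrightarrow> good2 N L (d2 x y)"
  by (rule good2I[where S="{(x,y)}"]) (auto simp: supp2_def d2_def split: if_splits)

lemma good2_add2: "good2 N L \<phi> \<Longrightarrow> good2 N L \<psi> \<Longrightarrow> good2 N L (add2 \<phi> \<psi>)"
proof (rule good2I[where S="supp2 \<phi> \<union> supp2 \<psi>"])
  assume a: "good2 N L \<phi>" "good2 N L \<psi>"
  show "supp2 (add2 \<phi> \<psi>) \<subseteq> supp2 \<phi> \<union> supp2 \<psi>" by (auto simp: supp2_def add2_def)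
  show "finite (supp2 \<phi> \<union> supp2 \<psi>)" using a good2F by blast
  fix x y assume "add2 \<phi> \<psi> x y \<noteq> 0"
  then have "\<phi> x y \<noteq> 0 \<or> \<psi> x y \<noteq> 0" by (auto simp: add2_def)
  then show "vt N L x \<and> vt N L y" using a good2D by blast
qed
lemma good2_sub2: "good2 N L \<phi> \<Longrightarrow> good2 N L \<psi> \<Longrightarrow> good2 N L (sub2 \<phi> \<psi>)"
proof (rule good2I[where S="supp2 \<phi> \<union> supp2 \<psi>"])
  assume a: "good2 N L \<phi>" "good2 N L \<psi>"
  show "supp2 (sub2 \<phi> \<psi>) \<subseteq> supp2 \<phi> \<union> supp2 \<psi>" by (auto simp: supp2_def sub2_def)
  show "finite (supp2 \<phi> \<union> supp2 \<psi>)" using a good2F by blast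
  fix x y assume "sub2 \<phi> \<psi> x y \<noteq> 0"
  then have "\<phi> x y \<noteq> 0 \<or> \<psi> x y \<noteq> 0" by (auto simp: sub2_def)
  then show "vt N L x \<and> vt N L y" using a good2D by blast
qed
lemma good2_sm2: "good2 N L \<phi> \<Longrightarrow> good2 N L (sm2 c \<phi>)"
proof (rule good2I[where S="supp2 \<phi>"])
  assume a: "good2 N L \<phi>"
  show "supp2 (sm2 c \<phi>) \<subseteq> supp2 \<phi>" by (auto simp: supp2_def sm2_def)
  show "finite (supp2 \<phi>)" using a good2F by blast
  fix x y assume "sm2 c \<phi> x y \<noteq> 0"
  then have "\<phi> x y \<noteq> 0" by (auto simp: sm2_def)
  then show "vt N L x \<and> vt N L y" using a good2D by blast
qed
lemma good2_Z1: "good2 N L \<phi> \<Longrightarrow> good2 N L (Z1 \<phi>)"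
proof (rule good2I[where S="(\<lambda>(x,y). (incp x, y)) ` supp2 \<phi>"])
  assume a: "good2 N L \<phi>"
  show "supp2 (Z1 \<phi>) \<subseteq> (\<lambda>(x,y). (incp x, y)) ` supp2 \<phi>"
  proof
    fix z assume "z \<in> supp2 (Z1 \<phi>)"
    then obtain x y where z: "z = (x,y)" "\<phi> (decp x) y \<noteq> 0" by (auto simp: supp2_def Z1_def)
    then show "z \<in> (\<lambda>(x,y). (incp x, y)) ` supp2 \<phi>"
      by (intro image_eqI[where x="(decp x, y)"]) (auto simp: supp2_def)
  qed
  show "finite ((\<lambda>(x,y). (incp x, y)) ` supp2 \<phi>)" using a good2F by blast
  fix x y assume "Z1 \<phi> x y \<noteq> 0"
  then have "\<phi> (decp x) y \<noteq> 0" by (auto simp: Z1_def)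
  then show "vt N L x \<and> vt N L y" using a good2D by fastforce
qed
lemma good2_Z2: "good2 N L \<phi> \<Longrightarrow> good2 N L (Z2 \<phi>)"
proof (rule good2I[where S="(\<lambda>(x,y). (x, incp y)) ` supp2 \<phi>"])
  assume a: "good2 N L \<phi>"
  show "supp2 (Z2 \<phi>) \<subseteq> (\<lambda>(x,y). (x, incp y)) ` supp2 \<phi>"
  proof
    fix z assume "z \<in> supp2 (Z2 \<phi>)"
    then obtain x y where z: "z = (x,y)" "\<phi> x (decp y) \<noteq> 0" by (auto simp: supp2_def Z2_def)
    then show "z \<in> (\<lambda>(x,y). (x, incp y)) ` supp2 \<phi>"
      by (intro image_eqI[where x="(x, decp y)"]) (auto simp: supp2_def)
  qed
  show "finite ((\<lambda>(x,y). (x, incp y)) ` supp2 \<phi>)" using a good2F by blast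
  fix x y assume "Z2 \<phi> x y \<noteq> 0"
  then have "\<phi> x (decp y) \<noteq> 0" by (auto simp: Z2_def)
  then show "vt N L x \<and> vt N L y" using a good2D by fastforce
qed
lemma vt_sw: "vt N L (sw1 x y) \<Longrightarrow> vt N L (sw2 x y) \<Longrightarrow> vt N L x \<and> vt N L y"
  by (cases x; cases y) (simp add: vt_def)
lemma good2_Sw: "good2 N L \<phi> \<Longrightarrow> good2 N L (Sw \<phi>)"
proof (rule good2I[where S="(\<lambda>(x,y). (sw1 x y, sw2 x y)) ` supp2 \<phi>"])
  assume a: "good2 N L \<phi>"
  show "supp2 (Sw \<phi>) \<subseteq> (\<lambda>(x,y). (sw1 x y, sw2 x y)) ` supp2 \<phi>"
  proof
    fix z assume "z \<in> supp2 (Sw \<phi>)"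
    then obtain x y where z: "z = (x,y)" "\<phi> (sw1 x y) (sw2 x y) \<noteq> 0" by (auto simp: supp2_def Sw_def)
    then show "z \<in> (\<lambda>(x,y). (sw1 x y, sw2 x y)) ` supp2 \<phi>"
      by (intro image_eqI[where x="(sw1 x y, sw2 x y)"]) (auto simp: supp2_def sw_inv)
  qed
  show "finite ((\<lambda>(x,y). (sw1 x y, sw2 x y)) ` supp2 \<phi>)" using a good2F by blast
  fix x y assume "Sw \<phi> x y \<noteq> 0"
  then have "\<phi> (sw1 x y) (sw2 x y) \<noteq> 0" by (auto simp: Sw_def)
  then show "vt N L x \<and> vt N L y" using a good2D vt_sw by blast
qed

lemma good2_dd2: assumes "vt N L t1" "vt N L t2" shows "good2 N L (dd2 t1 t2)"
proof -
  obtain p1 r1 where t1: "t1 = (p1,r1)" by (cases t1)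
  obtain p2 r2 where t2: "t2 = (p2,r2)" by (cases t2)
  show ?thesis
  proof (rule good2I[where S="(\<lambda>j. ((j, r1), (p1 + p2 - 1 - j, r2))) ` {min p1 p2..max p1 p2}"])
    show "supp2 (dd2 t1 t2) \<subseteq> (\<lambda>j. ((j, r1), (p1 + p2 - 1 - j, r2))) ` {min p1 p2..max p1 p2}"
    proof
      fix z assume "z \<in> supp2 (dd2 t1 t2)"
      then obtain x y where z: "z = (x,y)" "dd2 t1 t2 x y \<noteq> 0" by (auto simp: supp2_def)
      obtain xp xr where x: "x = (xp,xr)" by (cases x)
      obtain yp yr where y: "y = (yp,yr)" by (cases y)
      have "xr = r1 \<and> yr = r2 \<and> yp = p1 + p2 - 1 - xp \<and> xp \<in> {min p1 p2..max p1 p2}"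
        using z(2) unfolding t1 t2 x y dd2_def ddv_def by (auto split: if_splits)
      then show "z \<in> (\<lambda>j. ((j, r1), (p1 + p2 - 1 - j, r2))) ` {min p1 p2..max p1 p2}"
        using z x y by auto
    qed
    show "finite ((\<lambda>j. ((j, r1), (p1 + p2 - 1 - j, r2))) ` {min p1 p2..max p1 p2})" by simp
    fix x y assume nz: "dd2 t1 t2 x y \<noteq> 0"
    obtain xp xr where x: "x = (xp,xr)" by (cases x)
    obtain yp yr where y: "y = (yp,yr)" by (cases y)
    have "xr = r1 \<and> yr = r2" using nz unfolding t1 t2 x y dd2_def by (auto split: if_splits)
    then show "vt N L x \<and> vt N L y" using assms unfolding t1 t2 x y vt_def by simp
  qed
qed

lemma good2_C2: assumes "vt N L t1" "vt N L t2" shows "good2 N L (C2 N t1 t2)"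
proof -
  obtain p1 a1 e1 where t1: "t1 = (p1,a1,e1)" by (cases t1) auto
  obtain p2 a2 e2 where t2: "t2 = (p2,a2,e2)" by (cases t2) auto
  have v1: "vt N L (p2, a2, e1)" "vt N L (p1, a1, e2)" "vt N L (p2+1, a2, e2)"
    using assms unfolding t1 t2 by (auto simp: vt_def)
  note g = good2_dd2[OF assms] good2_d2[OF assms] good2_d2[OF v1(1,2)] good2_dd2[OF assms(1) v1(3)]
  show ?thesis unfolding C2_def t1 t2 Let_def prod.case using g unfolding t1 t2
    by (auto intro!: good2_sub2 good2_sm2 good2_Z1 good2_Z2)
qed

lemma good2_S2: assumes "vt N L t1" "vt N L t2" shows "good2 N L (S2 N t1 t2)"
proof -
  obtain p1 a1 e1 where t1: "t1 = (p1,a1,e1)" by (cases t1) auto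
  obtain p2 a2 e2 where t2: "t2 = (p2,a2,e2)" by (cases t2) auto
  have v1: "vt N L (p1, a1, e2)" "vt N L (p2, a2, e1)"
    using assms unfolding t1 t2 by (auto simp: vt_def)
  note g = good2_d2[OF assms] good2_d2[OF v1]
  show ?thesis unfolding S2_def t1 t2 Let_def prod.case using g unfolding t1 t2
    by (auto intro!: good2_add2 good2_sm2)
qed

lemma valid_upd2:
  assumes "valid_idx N L n k" "Suc i < n" "vt N L x" "vt N L y"
  shows "valid_idx N L n (upd2 i k x y)"
  using assms unfolding valid_idx_vt by (auto simp: upd2_def nth_list_update)

lemma is_tensor_lift:
  assumes k: "valid_idx N L n k" and i: "Suc i < n" and g: "good2 N L \<phi>"
  shows "is_tensor N L n (lift i k \<phi>)"
proof -
  have lk: "Suc i < length k" using k i by (simp add: valid_idx_def)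
  have "tsupp (lift i k \<phi>) \<subseteq> (\<lambda>(x,y). upd2 i k x y) ` supp2 \<phi>"
  proof
    fix k' assume "k' \<in> tsupp (lift i k \<phi>)"
    then have nz: "lift i k \<phi> k' \<noteq> 0" by (simp add: tsupp_def)
    show "k' \<in> (\<lambda>(x,y). upd2 i k x y) ` supp2 \<phi>"
      by (rule lift_cases[OF lk, of k' \<phi>]) (use nz in \<open>auto simp: supp2_def\<close>)
  qed
  then have "finite (tsupp (lift i k \<phi>))" using good2F[OF g] finite_subset by blast
  moreover have "valid_idx N L n k'" if "lift i k \<phi> k' \<noteq> 0" for k'
  proof (rule lift_cases[OF lk, of k' \<phi>])
    fix x y assume a: "k' = upd2 i k x y" "lift i k \<phi> k' = \<phi> x y"
    then have "vt N L x \<and> vt N L y" using that good2D[OF g] by metis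
    then show ?thesis using a valid_upd2[OF k i] by blast
  next
    assume "\<not> inpl i k k'" "lift i k \<phi> k' = 0" then show ?thesis using that by simp
  qed
  ultimately show ?thesis by (simp add: is_tensor_def)
qed

section \<open>cT and sT on basis vectors\<close>

lemma dprime_lift: assumes "Suc i < length k"
  shows "dprime N i (lift i k \<phi>) = lift i k (D2 N \<phi>)"
  unfolding dprime_def D2_def using assms
  by (simp add: zmul1_lift zmul2_lift smul_lift tsub_lift)

lemma C2_EQ:
  assumes lk: "Suc i < length k"
  shows "EQ N i (lift i k (C2 N (k!i) (k!Suc i))) (tdelta k)"
proof (rule EQ_from_Q)
  show "lift i k (add2 (C2 N (k!i) (k!Suc i)) (d2 (k!i) (k!Suc i))) = tadd (lift i k (C2 N (k!i) (k!Suc i))) (tdelta k)"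
    unfolding tdelta_lift0[OF lk] tadd_lift ..
  show "tsub (zmul i (lift i k (add2 (C2 N (k!i) (k!Suc i)) (d2 (k!i) (k!Suc i)))))
             (zmul (Suc i) (lift i k (add2 (C2 N (k!i) (k!Suc i)) (d2 (k!i) (k!Suc i))))) =
        tsub (sflip i (Rop N i (tdelta k))) (dprime N i (tdelta k))"
    unfolding zmul1_lift[OF lk] zmul2_lift[OF lk] tsub_lift claimA2 Rop_def lin_ext_tdelta
      R_basis_lift[OF lk] sflip_lift[OF lk]
    unfolding tdelta_lift0[OF lk] dprime_lift[OF lk] tsub_lift ..
qed

lemma cT_delta:
  assumes k: "valid_idx N L n k" and i: "Suc i < n"
  shows "cT N L n i (tdelta k) = lift i k (C2 N (k!i) (k!Suc i))"
proof (rule cT_eqI[OF _ _ i])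
  have lk: "Suc i < length k" using k i by (simp add: valid_idx_def)
  have v: "vt N L (k!i)" "vt N L (k!Suc i)" using k i by (auto simp: valid_idx_vt)
  show "is_tensor N L n (lift i k (C2 N (k!i) (k!Suc i)))"
    by (rule is_tensor_lift[OF k i good2_C2[OF v]])
  show "EQ N i (lift i k (C2 N (k!i) (k!Suc i))) (tdelta k)" by (rule C2_EQ[OF lk])
qed

lemma sT_delta: "Suc i < length k \<Longrightarrow> sT N i (tdelta k) = lift i k (S2 N (k!i) (k!Suc i))"
  unfolding sT_def lin_ext_tdelta by (rule sT_basis_lift)



definition gd :: "nat \<Rightarrow> nat \<Rightarrow> nat \<Rightarrow> nat \<Rightarrow> tensor \<Rightarrow> bool" where
  "gd N L n i v \<longleftrightarrow> is_tensor N L n v \<and> (\<exists>w. is_tensor N L n w \<and> EQ N i w v)"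

lemma gd_cT: assumes "gd N L n i v" "Suc i < n"
  shows "is_tensor N L n (cT N L n i v) \<and> EQ N i (cT N L n i v) v"
proof -
  obtain w where "is_tensor N L n w" "EQ N i w v" using assms(1) by (auto simp: gd_def)
  then show ?thesis using cT_eqI[OF _ _ assms(2)] by metis
qed

lemma is_tensor_zero: "is_tensor N L n (\<lambda>_. 0)"
  by (simp add: is_tensor_def tsupp_def)
lemma is_tensor_tadd: "is_tensor N L n a \<Longrightarrow> is_tensor N L n b \<Longrightarrow> is_tensor N L n (tadd a b)"
  unfolding is_tensor_def using fin_tadd by (auto simp: tadd_def) (metis add.right_neutral add_0)+
lemma is_tensor_smul: "is_tensor N L n a \<Longrightarrow> is_tensor N L n (smul c a)"
  unfolding is_tensor_def using fin_smul by (auto simp: smul_def)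

lemma EQ_zero: "EQ N i (\<lambda>_. 0) (\<lambda>_. 0)"
  by (simp add: EQ_def Rop_def tadd_def tsub_def smul_def dprime_def zmul_alt sflip_alt fun_eq_iff)

lemma Rop_tadd: "finite (tsupp a) \<Longrightarrow> finite (tsupp b) \<Longrightarrow> Rop N i (tadd a b) = tadd (Rop N i a) (Rop N i b)"
  unfolding Rop_def by (rule lin_ext_tadd)
lemma Rop_smul: "finite (tsupp a) \<Longrightarrow> Rop N i (smul c a) = smul c (Rop N i a)"
  unfolding Rop_def by (rule lin_ext_smul)

definition LOP :: "nat \<Rightarrow> nat \<Rightarrow> tensor \<Rightarrow> tensor" where
  "LOP N i u = tsub (zmul i (dprime N i u)) (zmul (Suc i) (dprime N i u))"
definition ROP :: "nat \<Rightarrow> nat \<Rightarrow> tensor \<Rightarrow> tensor" where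
  "ROP N i v = (let X = tsub (dprime N i v) (sflip i (Rop N i v)) in
        tsub (zmul i X) (smul ((qpar N)^2) (zmul (Suc i) X)))"
lemma EQ_LR: "EQ N i w v \<longleftrightarrow> LOP N i (tadd w v) = ROP N i v"
  unfolding EQ_def LOP_def ROP_def ..

lemma tsub_tadd_tadd: "tsub (tadd a b) (tadd c d) = tadd (tsub a c) (tsub b d)"
  by (simp add: tsub_def tadd_def fun_eq_iff)
lemma smul_tadd: "smul c (tadd a b) = tadd (smul c a) (smul c b)"
  by (simp add: smul_def tadd_def fun_eq_iff algebra_simps)
lemma tsub_smul: "tsub (smul c a) (smul c b) = smul c (tsub a b)"
  by (simp add: smul_def tsub_def fun_eq_iff algebra_simps)
lemma smul_smul: "smul c (smul d a) = smul d (smul c a)"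
  by (simp add: smul_def fun_eq_iff algebra_simps)

lemma LOP_tadd: "LOP N i (tadd a b) = tadd (LOP N i a) (LOP N i b)"
  unfolding LOP_def dprime_tadd zmul_tadd tsub_tadd_tadd ..
lemma ROP_tadd: "finite (tsupp a) \<Longrightarrow> finite (tsupp b) \<Longrightarrow> ROP N i (tadd a b) = tadd (ROP N i a) (ROP N i b)"
  unfolding ROP_def Let_def Rop_tadd dprime_tadd sflip_tadd tsub_tadd_tadd zmul_tadd smul_tadd by simp
lemma LOP_smul: "LOP N i (smul c a) = smul c (LOP N i a)"
  unfolding LOP_def dprime_smul zmul_smul tsub_smul ..
lemma ROP_smul: "finite (tsupp a) \<Longrightarrow> ROP N i (smul c a) = smul c (ROP N i a)"
  unfolding ROP_def Let_def Rop_smul dprime_smul sflip_smul tsub_smul zmul_smul 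
  by (simp add: smul_smul tsub_smul)

lemma EQ_tadd:
  assumes "EQ N i w1 v1" "EQ N i w2 v2" "finite (tsupp v1)" "finite (tsupp v2)"
  shows "EQ N i (tadd w1 w2) (tadd v1 v2)"
proof -
  have s: "tadd (tadd w1 w2) (tadd v1 v2) = tadd (tadd w1 v1) (tadd w2 v2)"
    by (simp add: tadd_def fun_eq_iff algebra_simps)
  from assms(1,2) show ?thesis
    unfolding EQ_LR s LOP_tadd ROP_tadd[OF assms(3,4)] by simp
qed

lemma EQ_smul:
  assumes "EQ N i w v" "finite (tsupp v)"
  shows "EQ N i (smul c w) (smul c v)"
proof -
  have s: "tadd (smul c w) (smul c v) = smul c (tadd w v)"
    by (simp add: tadd_def smul_def fun_eq_iff algebra_simps)
  from assms(1) show ?thesis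
    unfolding EQ_LR s LOP_smul ROP_smul[OF assms(2)] by simp
qed

lemma gd_zero: "gd N L n i (\<lambda>_. 0)"
  unfolding gd_def using EQ_zero[of N i] is_tensor_zero[of N L n] by blast

lemma gd_tadd: assumes "gd N L n i a" "gd N L n i b" shows "gd N L n i (tadd a b)"
proof -
  obtain wa where a: "is_tensor N L n wa" "EQ N i wa a" using assms(1) by (auto simp: gd_def)
  obtain wb where b: "is_tensor N L n wb" "EQ N i wb b" using assms(2) by (auto simp: gd_def)
  have f: "finite (tsupp a)" "finite (tsupp b)" using assms by (auto simp: gd_def is_tensor_def)
  show ?thesis using assms a b EQ_tadd[OF a(2) b(2) f] is_tensor_tadd unfolding gd_def by blast
qed

lemma gd_smul: assumes "gd N L n i a" shows "gd N L n i (smul c a)"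
proof -
  obtain wa where a: "is_tensor N L n wa" "EQ N i wa a" using assms(1) by (auto simp: gd_def)
  have f: "finite (tsupp a)" using assms by (auto simp: gd_def is_tensor_def)
  show ?thesis using assms a EQ_smul[OF a(2) f] is_tensor_smul unfolding gd_def by blast
qed

lemma gd_delta: assumes "valid_idx N L n k" "Suc i < n" shows "gd N L n i (tdelta k)"
proof -
  have lk: "Suc i < length k" using assms by (simp add: valid_idx_def)
  have v: "vt N L (k!j)" if "j < n" for j using assms that by (auto simp: valid_idx_vt)
  have "tdelta k = lift i k (d2 (k!i) (k!Suc i))" by (rule tdelta_lift0[OF lk])
  then have "is_tensor N L n (tdelta k)"
    using is_tensor_lift[OF assms good2_d2[OF v v]] assms(2) by simp
  moreover have "is_tensor N L n (lift i k (C2 N (k!i) (k!Suc i)))"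
    using is_tensor_lift[OF assms good2_C2[OF v v]] assms(2) by simp
  moreover have "EQ N i (lift i k (C2 N (k!i) (k!Suc i))) (tdelta k)" by (rule C2_EQ[OF lk])
  ultimately show ?thesis unfolding gd_def by blast
qed


lemma cT_tadd: assumes "gd N L n i a" "gd N L n i b" "Suc i < n"
  shows "cT N L n i (tadd a b) = tadd (cT N L n i a) (cT N L n i b)"
proof (rule cT_eqI[OF _ _ assms(3)])
  note A = gd_cT[OF assms(1,3)] and B = gd_cT[OF assms(2,3)]
  show "is_tensor N L n (tadd (cT N L n i a) (cT N L n i b))" using A B is_tensor_tadd by blast
  have f: "finite (tsupp a)" "finite (tsupp b)" using assms by (auto simp: gd_def is_tensor_def)
  show "EQ N i (tadd (cT N L n i a) (cT N L n i b)) (tadd a b)" using A B EQ_tadd f by blast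
qed

lemma cT_smul: assumes "gd N L n i a" "Suc i < n"
  shows "cT N L n i (smul c a) = smul c (cT N L n i a)"
proof (rule cT_eqI[OF _ _ assms(2)])
  note A = gd_cT[OF assms(1,2)]
  show "is_tensor N L n (smul c (cT N L n i a))" using A is_tensor_smul by blast
  have f: "finite (tsupp a)" using assms by (auto simp: gd_def is_tensor_def)
  show "EQ N i (smul c (cT N L n i a)) (smul c a)" using A EQ_smul f by blast
qed

lemma cT_zero: "Suc i < n \<Longrightarrow> cT N L n i (\<lambda>_. 0) = (\<lambda>_. 0)"
  by (rule cT_eqI[OF is_tensor_zero EQ_zero])

lemma sT_tadd: "finite (tsupp a) \<Longrightarrow> finite (tsupp b) \<Longrightarrow> sT N i (tadd a b) = tadd (sT N i a) (sT N i b)"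
  unfolding sT_def by (rule lin_ext_tadd)
lemma sT_smul: "finite (tsupp a) \<Longrightarrow> sT N i (smul c a) = smul c (sT N i a)"
  unfolding sT_def by (rule lin_ext_smul)
lemma sT_zero: "sT N i (\<lambda>_. 0) = (\<lambda>_. 0)"
  unfolding sT_def by simp

definition Jset :: "nat \<Rightarrow> nat \<Rightarrow> nat \<Rightarrow> tensor set" where
  "Jset N L n = {v. \<exists>x. (\<forall>j. gd N L n j (x j)) \<and>
      v = (\<lambda>k. \<Sum>j<n - 1. cT N L n j (x j) k - sT N j (x j) k)}"

lemma JI: "(\<forall>j. gd N L n j (x j)) \<Longrightarrow> v = (\<lambda>k. \<Sum>j<n - 1. cT N L n j (x j) k - sT N j (x j) k) \<Longrightarrow> v \<in> Jset N L n"
  unfolding Jset_def by blast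

lemma J_zero: "(\<lambda>_. 0) \<in> Jset N L n"
proof -
  have "(\<lambda>_. 0) = (\<lambda>k. \<Sum>j<n - 1. cT N L n j (\<lambda>_. 0) k - sT N j (\<lambda>_. 0) k)"
    by (rule ext, rule sym, rule sum.neutral) (simp add: cT_zero sT_zero)
  then show ?thesis by (intro JI[of N L n "\<lambda>_. \<lambda>_. 0"]) (simp_all add: gd_zero)
qed

lemma J_add: assumes "a \<in> Jset N L n" "b \<in> Jset N L n" shows "tadd a b \<in> Jset N L n"
proof -
  obtain x where x: "\<forall>j. gd N L n j (x j)" "a = (\<lambda>k. \<Sum>j<n - 1. cT N L n j (x j) k - sT N j (x j) k)"
    using assms(1) unfolding Jset_def by blast
  obtain y where y: "\<forall>j. gd N L n j (y j)" "b = (\<lambda>k. \<Sum>j<n - 1. cT N L n j (y j) k - sT N j (y j) k)"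
    using assms(2) unfolding Jset_def by blast
  let ?z = "\<lambda>j. tadd (x j) (y j)"
  have gz: "\<forall>j. gd N L n j (?z j)" using x y gd_tadd by blast
  have "cT N L n j (?z j) k - sT N j (?z j) k = (cT N L n j (x j) k - sT N j (x j) k) + (cT N L n j (y j) k - sT N j (y j) k)"
    if "j < n - 1" for j k
  proof -
    have j: "Suc j < n" using that by simp
    have f: "finite (tsupp (x j))" "finite (tsupp (y j))" using x y by (auto simp: gd_def is_tensor_def)
    show ?thesis unfolding cT_tadd[OF x(1)[rule_format] y(1)[rule_format] j] sT_tadd[OF f]
      by (simp add: tadd_def)
  qed
  then have "tadd a b = (\<lambda>k. \<Sum>j<n - 1. cT N L n j (?z j) k - sT N j (?z j) k)"
    unfolding x(2) y(2) tadd_def by (simp add: sum.distrib)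
  then show ?thesis by (rule JI[OF gz])
qed

lemma J_smul: assumes "a \<in> Jset N L n" shows "smul c a \<in> Jset N L n"
proof -
  obtain x where x: "\<forall>j. gd N L n j (x j)" "a = (\<lambda>k. \<Sum>j<n - 1. cT N L n j (x j) k - sT N j (x j) k)"
    using assms(1) unfolding Jset_def by blast
  let ?z = "\<lambda>j. smul c (x j)"
  have gz: "\<forall>j. gd N L n j (?z j)" using x gd_smul by blast
  have "cT N L n j (?z j) k - sT N j (?z j) k = c * (cT N L n j (x j) k - sT N j (x j) k)"
    if "j < n - 1" for j k
  proof -
    have j: "Suc j < n" using that by simp
    have f: "finite (tsupp (x j))" using x by (auto simp: gd_def is_tensor_def)
    show ?thesis unfolding cT_smul[OF x(1)[rule_format] j] sT_smul[OF f]
      by (simp add: smul_def algebra_simps)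
  qed
  then have "smul c a = (\<lambda>k. \<Sum>j<n - 1. cT N L n j (?z j) k - sT N j (?z j) k)"
    unfolding x(2) smul_def by (simp add: sum_distrib_left)
  then show ?thesis by (rule JI[OF gz])
qed

lemma J_gen: assumes "valid_idx N L n k" "Suc i < n"
  shows "(\<lambda>k'. cT N L n i (tdelta k) k' - sT N i (tdelta k) k') \<in> Jset N L n"
proof -
  let ?x = "\<lambda>j. if j = i then tdelta k else (\<lambda>_. 0)"
  have gx: "\<forall>j. gd N L n j (?x j)" using gd_delta[OF assms] gd_zero by simp
  have "(\<lambda>k'. \<Sum>j<n - 1. cT N L n j (?x j) k' - sT N j (?x j) k') =
        (\<lambda>k'. \<Sum>j<n - 1. if j = i then cT N L n i (tdelta k) k' - sT N i (tdelta k) k' else 0)"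
    by (rule ext, rule sum.cong) (auto simp: cT_zero sT_zero)
  also have "\<dots> = (\<lambda>k'. cT N L n i (tdelta k) k' - sT N i (tdelta k) k')"
  proof -
    have "i < n - 1" using assms(2) by simp
    then show ?thesis by (simp add: sum.delta)
  qed
  finally show ?thesis by (rule JI[OF gx, OF sym])
qed

lemma J_sum: assumes "finite A" "\<forall>a\<in>A. f a \<in> Jset N L n"
  shows "(\<lambda>k. \<Sum>a\<in>A. f a k) \<in> Jset N L n"
  using assms
proof (induction A rule: finite_induct)
  case empty then show ?case using J_zero by simp
next
  case (insert a A)
  have "(\<lambda>k. \<Sum>a\<in>insert a A. f a k) = tadd (f a) (\<lambda>k. \<Sum>a\<in>A. f a k)"
    using insert(1,2) by (simp add: tadd_def fun_eq_iff)
  then show ?case using insert J_add by simp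
qed

lemma wedge_from_J: "tdelta (map (u_idx N L) ks) \<in> Jset N L (length ks) \<Longrightarrow> wedge_zero N L ks"
  unfolding wedge_zero_def Jset_def Let_def gd_def by blast



definition kval :: "nat \<Rightarrow> nat \<Rightarrow> tri \<Rightarrow> int" where
  "kval N L t = (case t of (p, a, e) \<Rightarrow> int e - int N * (int a + int L * p))"

lemma cv_less:
  assumes L: "1 \<le> L" and a: "1 \<le> a" "a \<le> L" "1 \<le> a'" "a' \<le> L"
  shows "int a + int L * p < int a' + int L * p' \<longleftrightarrow> p < p' \<or> (p = p' \<and> a < a')"
proof (cases "p < p'")
  case True
  then have "int L * p + int L \<le> int L * p'"
    by (metis add.commute int_distrib(2) mult.right_neutral mult_left_mono of_nat_0_le_iff zless_imp_add1_zle)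
  then show ?thesis using True a by simp
next
  case False
  show ?thesis
  proof (cases "p = p'")
    case True then show ?thesis by simp
  next
    case F2: False
    then have "p' < p" using False by simp
    then have "int L * p' + int L \<le> int L * p"
      by (metis add.commute int_distrib(2) mult.right_neutral mult_left_mono of_nat_0_le_iff zless_imp_add1_zle)
    then show ?thesis using False F2 a by simp
  qed
qed

lemma kval_less:
  assumes N: "1 \<le> N" and L: "1 \<le> L" and v: "vt N L (p,a,e)" "vt N L (p',a',e')"
  shows "kval N L (p,a,e) < kval N L (p',a',e') \<longleftrightarrow> p' < p \<or> (p' = p \<and> a' < a) \<or> (p' = p \<and> a' = a \<and> e < e')"
proof -
  let ?c = "int a + int L * p" and ?c' = "int a' + int L * p'"
  have va: "1 \<le> a" "a \<le> L" "1 \<le> e" "e \<le> N" "1 \<le> a'" "a' \<le> L" "1 \<le> e'" "e' \<le> N"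
    using v by (auto simp: vt_def)
  have k: "kval N L (p,a,e) = int e - int N * ?c" "kval N L (p',a',e') = int e' - int N * ?c'"
    by (simp_all add: kval_def)
  have "kval N L (p,a,e) < kval N L (p',a',e') \<longleftrightarrow> ?c' < ?c \<or> (?c' = ?c \<and> e < e')"
  proof (cases "?c' < ?c")
    case True
    then have "int N * ?c' + int N \<le> int N * ?c"
      by (metis add.commute int_distrib(2) mult.right_neutral mult_left_mono of_nat_0_le_iff zless_imp_add1_zle)
    then show ?thesis using True k va by simp
  next
    case False
    show ?thesis
    proof (cases "?c' = ?c")
      case True then show ?thesis using k by simp
    next
      case F2: False
      then have "?c < ?c'" using False by simp
      then have "int N * ?c + int N \<le> int N * ?c'"
        by (metis add.commute int_distrib(2) mult.right_neutral mult_left_mono of_nat_0_le_iff zless_imp_add1_zle)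
      then show ?thesis using False F2 k va by simp
    qed
  qed
  also have "\<dots> \<longleftrightarrow> p' < p \<or> (p' = p \<and> a' < a) \<or> (p' = p \<and> a' = a \<and> e < e')"
  proof -
    have A: "?c' < ?c \<longleftrightarrow> p' < p \<or> (p' = p \<and> a' < a)" using cv_less[OF L va(5,6,1,2)] .
    have B: "?c < ?c' \<longleftrightarrow> p < p' \<or> (p = p' \<and> a < a')" using cv_less[OF L va(1,2,5,6)] .
    have "?c' = ?c \<longleftrightarrow> \<not> ?c' < ?c \<and> \<not> ?c < ?c'" by linarith
    then have "?c' = ?c \<longleftrightarrow> p' = p \<and> a' = a" unfolding A B by auto
    then show ?thesis using A by auto
  qed
  finally show ?thesis .
qed


lemma C2_diag:
  assumes "p1 < p2 \<or> (p1 = p2 \<and> a1 < a2)"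
  shows "C2 N (p1,a1,e1) (p2,a2,e2) (p1,a1,e1) (p2,a2,e2) = (qpar N)^2 - 1"
proof -
  consider "a1 = a2" | "a2 < a1" | "a1 < a2" by linarith
  then show ?thesis
  proof cases
    case 1 then show ?thesis using assms
      by (simp add: C2_def Let_def sub2_def sm2_def Z1_def Z2_def dd2_def ddv_def d2_def)
  next
    case 2 then show ?thesis using assms
      by (simp add: C2_def Let_def sub2_def sm2_def Z1_def Z2_def dd2_def ddv_def d2_def)
  next
    case 3 then show ?thesis using assms
      by (auto simp add: C2_def Let_def sub2_def sm2_def Z1_def Z2_def dd2_def ddv_def d2_def)
  qed
qed

lemma C2_T:
  assumes "p1 < p2 \<or> (p1 = p2 \<and> a1 < a2)"
  shows "C2 N (p1,a1,e1) (p2,a2,e2) (p2,a2,e1) (p1,a1,e2) = (if a1 = a2 then -1 else - qpar N)"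
proof -
  consider "a1 = a2" | "a2 < a1" | "a1 < a2" by linarith
  then show ?thesis
  proof cases
    case 1 then show ?thesis using assms
      by (simp add: C2_def Let_def sub2_def sm2_def Z1_def Z2_def dd2_def ddv_def d2_def)
  next
    case 2 then show ?thesis using assms
      by (simp add: C2_def Let_def sub2_def sm2_def Z1_def Z2_def dd2_def ddv_def d2_def)
  next
    case 3 then show ?thesis using assms
      by (simp add: C2_def Let_def sub2_def sm2_def Z1_def Z2_def dd2_def ddv_def d2_def)
  qed
qed

lemma C2_int:
  assumes lex: "p1 < p2 \<or> (p1 = p2 \<and> a1 < a2)"
    and nz: "C2 N (p1,a1,e1) (p2,a2,e2) x y \<noteq> 0"
    and n1: "(x,y) \<noteq> ((p1,a1,e1),(p2,a2,e2))" and n2: "(x,y) \<noteq> ((p2,a2,e1),(p1,a1,e2))"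
  shows "\<exists>px py. x = (px,a1,e1) \<and> y = (py,a2,e2) \<and>
     (p1 < px \<or> (p1 = px \<and> a1 < a1)) \<and> (px < p2 \<or> (px = p2 \<and> a1 < a2)) \<and>
     (p1 < py \<or> (p1 = py \<and> a1 < a2)) \<and> (py < p2 \<or> (py = p2 \<and> a2 < a2))"
proof -
  obtain px xa xe where x: "x = (px,xa,xe)" by (cases x) auto
  obtain py ya ye where y: "y = (py,ya,ye)" by (cases y) auto
  consider "a1 = a2" | "a2 < a1" | "a1 < a2" by linarith
  then show ?thesis
  proof cases
    case 1
    have "(xa = a1 \<and> xe = e1 \<and> ya = a2 \<and> ye = e2 \<and> px - 1 + py = p1 + p2 - 1 \<and> ddv p1 p2 (px - 1) \<noteq> 0)
      \<or> (xa = a1 \<and> xe = e1 \<and> ya = a2 \<and> ye = e2 \<and> px + (py - 1) = p1 + p2 - 1 \<and> ddv p1 p2 px \<noteq> 0)"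
      using nz n1 1 unfolding x y
      by (auto simp: C2_def Let_def sub2_def sm2_def Z1_def Z2_def dd2_def d2_def split: if_splits)
    then show ?thesis using n1 n2 lex 1 unfolding x y by (auto simp: ddv_def split: if_splits)
  next
    case 2
    have "xa = a1 \<and> xe = e1 \<and> ya = a2 \<and> ye = e2 \<and> px + (py - 1) = p1 + p2 - 1 \<and> ddv p1 p2 px \<noteq> 0"
      using nz n2 2 unfolding x y
      by (auto simp: C2_def Let_def sub2_def sm2_def Z1_def Z2_def dd2_def d2_def split: if_splits)
    then show ?thesis using n1 n2 lex 2 unfolding x y by (auto simp: ddv_def split: if_splits)
  next
    case 3
    have "xa = a1 \<and> xe = e1 \<and> ya = a2 \<and> ye = e2 \<and> px + py = p1 + (p2 + 1) - 1 \<and> ddv p1 (p2 + 1) px \<noteq> 0"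
      using nz n2 3 unfolding x y
      by (auto simp: C2_def Let_def sub2_def sm2_def Z1_def Z2_def dd2_def d2_def split: if_splits)
    then show ?thesis using n1 n2 lex 3 unfolding x y by (auto simp: ddv_def split: if_splits)
  qed
qed



lemma Fract_pow: "Fract (a::'a::idom) 1 ^ n = Fract (a ^ n) 1"
  by (induction n) (simp_all add: One_fract_def)

lemma qpar_eq: "qpar N = Fract ([:0,1:] ^ (2*N)) 1"
  unfolding qpar_def qroot_def Fract_pow ..

lemma qpar_nz: "qpar N \<noteq> 0"
proof
  assume "qpar N = 0"
  then have "Fract ([:0,1:] ^ (2*N) :: rat poly) 1 = Fract 0 1" by (simp add: qpar_eq Zero_fract_def)
  then have "([:0,1:] ^ (2*N) :: rat poly) = 0" by (simp add: eq_fract)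
  then have "poly ([:0,1:] ^ (2*N) :: rat poly) 1 = 0" by simp
  then show False by (simp add: poly_power)
qed

lemma qpar_sq: "1 + (qpar N)^2 \<noteq> 0" if "1 \<le> N"
proof
  assume "1 + (qpar N)^2 = 0"
  then have "Fract (1 + [:0,1:] ^ (4*N) :: rat poly) 1 = Fract 0 1"
    by (simp add: qpar_eq Fract_pow One_fract_def Zero_fract_def power_mult[symmetric] mult.commute)
  then have "(1 + [:0,1:] ^ (4*N) :: rat poly) = 0" by (simp add: eq_fract)
  then have "poly (1 + [:0,1:] ^ (4*N) :: rat poly) 0 = 0" by simp
  then show False using that by (simp add: poly_power power_0_left)
qed

lemma C2_eqpa: "C2 N (p,a,e1) (p,a,e2) x y = - d2 (p,a,e1) (p,a,e2) x y"
  by (simp add: C2_def Let_def sub2_def sm2_def Z1_def Z2_def dd2_def ddv_def)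

lemma S2_supp: "S2 N (p1,a1,e1) (p2,a2,e2) x y \<noteq> 0 \<Longrightarrow>
   (x,y) = ((p1,a1,e1),(p2,a2,e2)) \<or> (x,y) = ((p1,a1,e2),(p2,a2,e1))"
  by (auto simp: S2_def Let_def sm2_def add2_def d2_def split: if_splits)

lemma S2_val: "S2 N (p1,a1,e1) (p2,a2,e2) x y =
   (if e1 = e2 then (qpar N)^2 * d2 (p1,a1,e1) (p2,a2,e2) x y
    else if e1 < e2 then qpar N * d2 (p1,a1,e2) (p2,a2,e1) x y
    else qpar N * d2 (p1,a1,e2) (p2,a2,e1) x y + ((qpar N)^2 - 1) * d2 (p1,a1,e1) (p2,a2,e2) x y)"
  by (simp add: S2_def Let_def sm2_def add2_def)

lemma straight2:
  assumes N: "1 \<le> N" and L: "1 \<le> L" and vl: "vt N L (pl,al,el)" and vm: "vt N L (pm,am,em)"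
    and le: "kval N L (pl,al,el) \<le> kval N L (pm,am,em)"
  shows "C2 N (pm,am,el) (pl,al,em) (pl,al,el) (pm,am,em) - S2 N (pm,am,el) (pl,al,em) (pl,al,el) (pm,am,em) \<noteq> 0"
    and "\<And>x y. C2 N (pm,am,el) (pl,al,em) x y - S2 N (pm,am,el) (pl,al,em) x y \<noteq> 0 \<Longrightarrow>
        (x,y) \<noteq> ((pl,al,el),(pm,am,em)) \<Longrightarrow>
        vt N L x \<and> vt N L y \<and> kval N L (pl,al,el) < kval N L x \<and> kval N L x \<le> kval N L (pm,am,em) \<and>
        kval N L (pl,al,el) \<le> kval N L y \<and> kval N L y < kval N L (pm,am,em)"
proof -
  have va: "1 \<le> al" "al \<le> L" "1 \<le> el" "el \<le> N" "1 \<le> am" "am \<le> L" "1 \<le> em" "em \<le> N"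
    using vl vm by (auto simp: vt_def)
  have V: "vt N L (p, al, e)" "vt N L (p, am, e)" if "e = el \<or> e = em" for p e
    using va that by (auto simp: vt_def)
  note KL = kval_less[OF N L]
  have "\<not> kval N L (pm,am,em) < kval N L (pl,al,el)" using le by simp
  then have ord: "pm < pl \<or> (pm = pl \<and> am < al) \<or> (pm = pl \<and> am = al \<and> el \<le> em)"
    unfolding KL[OF vm vl] by auto
  let ?\<Phi> = "\<lambda>x y. C2 N (pm,am,el) (pl,al,em) x y - S2 N (pm,am,el) (pl,al,em) x y"
  have q0: "qpar N \<noteq> 0" by (rule qpar_nz)
  have q1: "1 + (qpar N)^2 \<noteq> 0" by (rule qpar_sq[OF N])
  have goal: "?\<Phi> (pl,al,el) (pm,am,em) \<noteq> 0 \<and> (\<forall>x y. ?\<Phi> x y \<noteq> 0 \<longrightarrow>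
        (x,y) \<noteq> ((pl,al,el),(pm,am,em)) \<longrightarrow>
        vt N L x \<and> vt N L y \<and> kval N L (pl,al,el) < kval N L x \<and> kval N L x \<le> kval N L (pm,am,em) \<and>
        kval N L (pl,al,el) \<le> kval N L y \<and> kval N L y < kval N L (pm,am,em))"
  proof (cases "pm = pl \<and> am = al")
    case True
    then have pa: "pm = pl" "am = al" by auto
    have lem: "el \<le> em" using ord True by auto
    have phi: "?\<Phi> x y = - d2 (pl,al,el) (pl,al,em) x y - S2 N (pl,al,el) (pl,al,em) x y" for x y
      unfolding pa C2_eqpa ..
    show ?thesis
    proof (rule conjI, goal_cases)
      case 1
      show "?\<Phi> (pl,al,el) (pm,am,em) \<noteq> 0"
        unfolding phi using lem q1 unfolding pa
        by (auto simp: S2_val d2_def algebra_simps)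
    next
      case 2
      show ?case
      proof (intro allI impI)
      fix x y assume nz: "?\<Phi> x y \<noteq> 0" and ne: "(x,y) \<noteq> ((pl,al,el),(pm,am,em))"
      have nz': "- d2 (pl,al,el) (pl,al,em) x y - S2 N (pl,al,el) (pl,al,em) x y \<noteq> 0"
        using nz phi by metis
      have "d2 (pl,al,el) (pl,al,em) x y = 0" using ne pa by (auto simp: d2_def)
      then have "S2 N (pl,al,el) (pl,al,em) x y \<noteq> 0" using nz' by simp
      then have xy: "el < em \<and> x = (pl,al,em) \<and> y = (pl,al,el)"
        using ne lem unfolding pa by (auto simp: S2_val d2_def split: if_splits)
      then show "vt N L x \<and> vt N L y \<and> kval N L (pl,al,el) < kval N L x \<and> kval N L x \<le> kval N L (pm,am,em) \<and>
        kval N L (pl,al,el) \<le> kval N L y \<and> kval N L y < kval N L (pm,am,em)"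
        using vl vm pa KL[OF vl vm] by auto
      qed
    qed
  next
    case False
    then have lex: "pm < pl \<or> (pm = pl \<and> am < al)" using ord by auto
    show ?thesis
    proof (rule conjI, goal_cases)
      case 1
      have "S2 N (pm,am,el) (pl,al,em) (pl,al,el) (pm,am,em) = 0"
        using False by (auto simp: S2_val d2_def)
      then show "?\<Phi> (pl,al,el) (pm,am,em) \<noteq> 0"
        using C2_T[OF lex, of N el em] q0 by auto
    next
      case 2
      show ?case
      proof (intro allI impI)
      fix x y assume nz: "?\<Phi> x y \<noteq> 0" and ne: "(x,y) \<noteq> ((pl,al,el),(pm,am,em))"
      show "vt N L x \<and> vt N L y \<and> kval N L (pl,al,el) < kval N L x \<and> kval N L x \<le> kval N L (pm,am,em) \<and>
        kval N L (pl,al,el) \<le> kval N L y \<and> kval N L y < kval N L (pm,am,em)"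
      proof (cases "(x,y) = ((pm,am,el),(pl,al,em))")
        case True
        have "?\<Phi> (pm,am,el) (pl,al,em) = (qpar N)^2 - 1 - S2 N (pm,am,el) (pl,al,em) (pm,am,el) (pl,al,em)"
          using C2_diag[OF lex, of N el em] by simp
        then have "el \<le> em" using nz True by (auto simp: S2_val d2_def split: if_splits)
        then show ?thesis using True V lex KL by (auto simp: order_le_less)
      next
        case F1: False
        show ?thesis
        proof (cases "(x,y) = ((pm,am,em),(pl,al,el))")
          case True
          then show ?thesis using vl vm lex KL[OF vm vl] KL[OF vl vm] by auto
        next
          case F2: False
          have "S2 N (pm,am,el) (pl,al,em) x y = 0" using S2_supp F1 F2 by blast
          then have "C2 N (pm,am,el) (pl,al,em) x y \<noteq> 0" using nz by simp
          from C2_int[OF lex this F1 ne] obtain px py where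
            I: "x = (px,am,el)" "y = (py,al,em)"
            "pm < px \<or> (pm = px \<and> am < am)" "px < pl \<or> (px = pl \<and> am < al)"
            "pm < py \<or> (pm = py \<and> am < al)" "py < pl \<or> (py = pl \<and> al < al)" by blast
          show ?thesis unfolding I(1,2)
            using I(3-6) V KL by (auto simp: order_le_less)
        qed
      qed
      qed
    qed
  qed
  then show "?\<Phi> (pl,al,el) (pm,am,em) \<noteq> 0" by blast
  fix x y assume "?\<Phi> x y \<noteq> 0" "(x,y) \<noteq> ((pl,al,el),(pm,am,em))"
  then show "vt N L x \<and> vt N L y \<and> kval N L (pl,al,el) < kval N L x \<and> kval N L x \<le> kval N L (pm,am,em) \<and>
        kval N L (pl,al,el) \<le> kval N L y \<and> kval N L y < kval N L (pm,am,em)" using goal by blast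
qed



lemma u_idx_char: "u_idx N L k = (THE t. vt N L t \<and> kval N L t = k)"
proof -
  have "(\<lambda>t. case t of (mm, a, e) \<Rightarrow>
      1 \<le> a \<and> a \<le> L \<and> 1 \<le> e \<and> e \<le> N \<and> k = int e - int N * (int a + int L * mm)) =
        (\<lambda>t. vt N L t \<and> kval N L t = k)"
    by (rule ext) (auto simp: vt_def kval_def split: prod.splits)
  then show ?thesis unfolding u_idx_def by simp
qed

lemma kval_inj:
  assumes N: "1 \<le> N" and L: "1 \<le> L" and v: "vt N L t" "vt N L t'" and e: "kval N L t = kval N L t'"
  shows "t = t'"
proof -
  obtain p a c where t: "t = (p,a,c)" by (cases t) auto
  obtain p' a' c' where t': "t' = (p',a',c')" by (cases t') auto
  have "\<not> kval N L t < kval N L t'" "\<not> kval N L t' < kval N L t" using e by auto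
  then have A: "\<not> (p' < p \<or> (p' = p \<and> a' < a) \<or> (p' = p \<and> a' = a \<and> c < c'))"
    and B: "\<not> (p < p' \<or> (p = p' \<and> a < a') \<or> (p = p' \<and> a = a' \<and> c' < c))"
    unfolding t t' using kval_less[OF N L, of p a c p' a' c'] kval_less[OF N L, of p' a' c' p a c] v
    unfolding t t' by blast+
  have 1: "p = p'" using A B by linarith
  have 2: "a = a'" using A B 1 by linarith
  have 3: "c = c'" using A B 1 2 by linarith
  show ?thesis unfolding t t' using 1 2 3 by simp
qed

lemma u_idx_ex:
  assumes N: "1 \<le> N" and L: "1 \<le> L"
  shows "\<exists>t. vt N L t \<and> kval N L t = k"
proof -
  define e where "e = (k - 1) mod int N + 1"
  define c where "c = - ((k - 1) div int N)"
  define a where "a = (c - 1) mod int L + 1"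
  define p where "p = (c - 1) div int L"
  have Np: "int N > 0" and Lp: "int L > 0" using N L by simp_all
  have e1: "1 \<le> e" "e \<le> int N" unfolding e_def
    using pos_mod_bound[OF Np, of "k - 1"] pos_mod_sign[OF Np, of "k - 1"] by linarith+
  have a1: "1 \<le> a" "a \<le> int L" unfolding a_def
    using pos_mod_bound[OF Lp, of "c - 1"] pos_mod_sign[OF Lp, of "c - 1"] by linarith+
  have ke: "k = e - int N * c"
  proof -
    have *: "(k - 1) div int N * int N + (k - 1) mod int N = k - 1" by (rule div_mult_mod_eq)
    have "int N * c = - ((k - 1) div int N * int N)" unfolding c_def by simp
    then show ?thesis unfolding e_def using * by linarith
  qed
  have ca: "c = a + int L * p"
  proof -
    have *: "(c - 1) div int L * int L + (c - 1) mod int L = c - 1" by (rule div_mult_mod_eq)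
    have "int L * p = (c - 1) div int L * int L" unfolding p_def by simp
    then show ?thesis unfolding a_def using * by linarith
  qed
  have "nat a \<le> L" "nat e \<le> N" "1 \<le> nat a" "1 \<le> nat e" using e1 a1 by linarith+
  then have "vt N L (p, nat a, nat e)" unfolding vt_def by simp
  moreover have "kval N L (p, nat a, nat e) = k" using e1 a1 ke ca by (simp add: kval_def)
  ultimately show ?thesis by blast
qed

lemma u_idx_props:
  assumes N: "1 \<le> N" and L: "1 \<le> L"
  shows "vt N L (u_idx N L k) \<and> kval N L (u_idx N L k) = k"
  unfolding u_idx_char
proof (rule theI')
  show "\<exists>!t. vt N L t \<and> kval N L t = k" using u_idx_ex[OF N L] kval_inj[OF N L] by metis
qed

lemma u_idx_kval:
  assumes N: "1 \<le> N" and L: "1 \<le> L" and v: "vt N L t"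
  shows "u_idx N L (kval N L t) = t"
  using u_idx_props[OF N L, of "kval N L t"] kval_inj[OF N L] v by metis

section \<open>The straightening step\<close>

abbreviation Z :: "nat \<Rightarrow> nat \<Rightarrow> int list \<Rightarrow> bool" where
  "Z N L ks \<equiv> tdelta (map (u_idx N L) ks) \<in> Jset N L (length ks)"

lemma J_tsub: "a \<in> Jset N L n \<Longrightarrow> b \<in> Jset N L n \<Longrightarrow> tsub a b \<in> Jset N L n"
proof -
  assume "a \<in> Jset N L n" "b \<in> Jset N L n"
  then have "tadd a (smul (-1) b) \<in> Jset N L n" using J_add J_smul by blast
  moreover have "tadd a (smul (-1) b) = tsub a b" by (simp add: tadd_def smul_def tsub_def fun_eq_iff)
  ultimately show ?thesis by simp
qed

lemma map_upd2:
  assumes "i = length A"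
  shows "upd2 i (map f (A @ [a, b] @ B)) x y = map f A @ [x, y] @ map f B"
  using assms by (simp add: upd2_def list_update_append)

lemma valid_map:
  assumes N: "1 \<le> N" and L: "1 \<le> L"
  shows "valid_idx N L (length ks) (map (u_idx N L) ks)"
  unfolding valid_idx_vt using u_idx_props[OF N L] by simp

lemma step:
  assumes N: "1 \<le> N" and L: "1 \<le> L" and lm: "l \<le> m"
    and IH: "\<And>a b. l < a \<Longrightarrow> a \<le> m \<Longrightarrow> l \<le> b \<Longrightarrow> b < m \<Longrightarrow> Z N L (A @ [a, b] @ B)"
  shows "Z N L (A @ [l, m] @ B)"
proof -
  let ?U = "u_idx N L"
  let ?k = "map ?U (A @ [l, m] @ B)"
  let ?n = "length (A @ [l, m] @ B)"
  let ?i = "length A"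
  have vU: "vt N L (?U j)" for j using u_idx_props[OF N L] by blast
  have kU: "kval N L (?U j) = j" for j using u_idx_props[OF N L] by blast
  have valk: "valid_idx N L ?n ?k" by (rule valid_map[OF N L])
  have i: "Suc ?i < ?n" by simp
  have lk: "Suc ?i < length ?k" by simp
  have ki: "?k ! ?i = ?U l" "?k ! Suc ?i = ?U m" by (simp_all add: nth_append)
  obtain pl al el where ul: "?U l = (pl,al,el)" by (cases "?U l") auto
  obtain pm am em where um: "?U m = (pm,am,em)" by (cases "?U m") auto
  have vl: "vt N L (pl,al,el)" and vm: "vt N L (pm,am,em)" using vU ul um by metis+
  have le: "kval N L (pl,al,el) \<le> kval N L (pm,am,em)" using kU[of l] kU[of m] ul um lm by simp
  define kx where "kx = upd2 ?i ?k (pm,am,el) (pl,al,em)"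
  have vx: "vt N L (pm,am,el)" "vt N L (pl,al,em)" using vl vm by (auto simp: vt_def)
  have valkx: "valid_idx N L ?n kx" unfolding kx_def by (rule valid_upd2[OF valk i vx])
  have lkx: "Suc ?i < length kx" unfolding kx_def by simp
  have kxi: "kx ! ?i = (pm,am,el)" "kx ! Suc ?i = (pl,al,em)" unfolding kx_def using lk by simp_all
  define \<Phi> where "\<Phi> = sub2 (C2 N (pm,am,el) (pl,al,em)) (S2 N (pm,am,el) (pl,al,em))"
  define Y where "Y = (\<lambda>k'. cT N L ?n ?i (tdelta kx) k' - sT N ?i (tdelta kx) k')"
  have YJ: "Y \<in> Jset N L ?n" unfolding Y_def by (rule J_gen[OF valkx i])
  have Ylift: "Y = lift ?i ?k \<Phi>"
  proof -
    have "Y = tsub (cT N L ?n ?i (tdelta kx)) (sT N ?i (tdelta kx))" by (simp add: Y_def tsub_def)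
    also have "\<dots> = tsub (lift ?i kx (C2 N (pm,am,el) (pl,al,em))) (lift ?i kx (S2 N (pm,am,el) (pl,al,em)))"
      unfolding cT_delta[OF valkx i] sT_delta[OF lkx] kxi ..
    also have "\<dots> = lift ?i ?k \<Phi>" unfolding kx_def lift_base tsub_lift \<Phi>_def ..
    finally show ?thesis .
  qed
  have kk: "?k = upd2 ?i ?k (pl,al,el) (pm,am,em)" using upd2_self[OF lk] ki ul um by simp
  have Yk: "Y ?k \<noteq> 0"
    using straight2(1)[OF N L vl vm le] unfolding Ylift
    by (subst kk) (simp add: lift_upd2[OF lk] \<Phi>_def sub2_def)
  have g\<Phi>: "good2 N L \<Phi>" unfolding \<Phi>_def by (rule good2_sub2[OF good2_C2[OF vx] good2_S2[OF vx]])
  have finY: "finite (tsupp Y)" using is_tensor_lift[OF valk i g\<Phi>] unfolding Ylift is_tensor_def by blast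
  have other: "tdelta k' \<in> Jset N L ?n" if "k' \<in> tsupp Y - {?k}" for k'
  proof -
    have nz: "Y k' \<noteq> 0" and ne: "k' \<noteq> ?k" using that by (auto simp: tsupp_def)
    show ?thesis
    proof (rule lift_cases[OF lk, of k' \<Phi>])
      fix x y assume k': "k' = upd2 ?i ?k x y" and lv: "lift ?i ?k \<Phi> k' = \<Phi> x y"
      have nz2: "C2 N (pm,am,el) (pl,al,em) x y - S2 N (pm,am,el) (pl,al,em) x y \<noteq> 0"
        using nz lv Ylift by (simp add: \<Phi>_def sub2_def)
      have ne2: "(x,y) \<noteq> ((pl,al,el),(pm,am,em))" using ne k' kk by auto
      note S = straight2(2)[OF N L vl vm le nz2 ne2]
      have bds: "l < kval N L x" "kval N L x \<le> m" "l \<le> kval N L y" "kval N L y < m"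
        using S kU[of l] kU[of m] ul um by simp_all
      have "Z N L (A @ [kval N L x, kval N L y] @ B)" using IH bds by blast
      moreover have "map ?U (A @ [kval N L x, kval N L y] @ B) = k'"
        unfolding k' map_upd2[of ?i A ?U l m B x y, OF refl]
        using u_idx_kval[OF N L] S by simp
      ultimately show ?thesis by simp
    next
      assume "\<not> inpl ?i ?k k'" "lift ?i ?k \<Phi> k' = 0"
      then show ?thesis using nz Ylift by simp
    qed
  qed
  define R where "R = (\<lambda>k''. \<Sum>k'\<in>tsupp Y - {?k}. Y k' * tdelta k' k'')"
  have RJ: "R \<in> Jset N L ?n" unfolding R_def
  proof (rule J_sum)
    show "finite (tsupp Y - {?k})" using finY by simp
    show "\<forall>k'\<in>tsupp Y - {?k}. (\<lambda>k''. Y k' * tdelta k' k'') \<in> Jset N L ?n"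
      using other J_smul unfolding smul_def by blast
  qed
  have dec: "Y k'' - R k'' = Y ?k * tdelta ?k k''" for k''
  proof -
    have "R k'' = (\<Sum>k'\<in>tsupp Y - {?k}. if k'' = k' then Y k' else 0)"
      unfolding R_def tdelta_def by (rule sum.cong) auto
    also have "\<dots> = (if k'' \<in> tsupp Y - {?k} then Y k'' else 0)"
      using finY by (simp add: sum.delta')
    finally have r: "R k'' = (if k'' \<in> tsupp Y - {?k} then Y k'' else 0)" .
    show ?thesis
    proof (cases "k'' = ?k")
      case True then show ?thesis using r by (simp add: tdelta_def)
    next
      case False then show ?thesis using r by (simp add: tdelta_def tsupp_def)
    qed
  qed
  have "tdelta ?k = smul (inverse (Y ?k)) (tsub Y R)"
  proof
    fix k''
    show "tdelta ?k k'' = smul (inverse (Y ?k)) (tsub Y R) k''"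
      unfolding smul_def tsub_def dec using Yk by simp
  qed
  then show ?thesis by (metis J_smul[OF J_tsub[OF YJ RJ]])
qed


lemma main_ind:
  assumes N: "1 \<le> N" and L: "1 \<le> L"
  shows "\<forall>l m A B. m - l = int d \<longrightarrow>
     Z N L (A @ rev [l..m] @ [m] @ B) \<and> Z N L (A @ [l] @ rev [l..m] @ B)"
proof (induction d rule: less_induct)
  case (less d)
  have D1: "Z N L (A' @ rev [l'..m'] @ [a] @ B')"
    if "l' \<le> a" "a \<le> m'" "a - l' < int d" for l' m' a A' B'
  proof -
    have sp: "[l'..m'] = [l'..a] @ [a+1..m']" using that upto_split2 by blast
    have "nat (a - l') < d" using that by simp
    note h = less.IH[OF this, rule_format]
    have e: "a - l' = int (nat (a - l'))" using that by simp
    have "Z N L ((A' @ rev [a+1..m']) @ rev [l'..a] @ [a] @ B')"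
      using h[OF e] by blast
    then show ?thesis unfolding sp by simp
  qed
  have D2: "Z N L (A' @ [b] @ rev [l'..m'] @ B')"
    if "l' \<le> b" "b \<le> m'" "m' - b < int d" for l' m' b A' B'
  proof -
    have sp: "[l'..m'] = [l'..b - 1] @ [b..m']" using that upto_split1 by blast
    have "nat (m' - b) < d" using that by simp
    note h = less.IH[OF this, rule_format]
    have e: "m' - b = int (nat (m' - b))" using that by simp
    have "Z N L (A' @ [b] @ rev [b..m'] @ (rev [l'..b - 1] @ B'))"
      using h[OF e] by blast
    then show ?thesis unfolding sp by simp
  qed
  show ?case
  proof (intro allI impI conjI)
    fix l m :: int and A B assume dl: "m - l = int d"
    then have lm: "l \<le> m" by simp
    have r1: "rev [l..m] @ [m] = rev [l+1..m] @ [l, m]" using upto_rec1[OF lm] by simp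
    have "Z N L ((A @ rev [l+1..m]) @ [l, m] @ B)"
    proof (rule step[OF N L lm])
      fix a b assume "l < a" "a \<le> m" "l \<le> b" "b < m"
      then have "Z N L (A @ rev [l+1..m] @ [a] @ (b # B))" using dl by (intro D1) simp_all
      then show "Z N L ((A @ rev [l+1..m]) @ [a, b] @ B)" by simp
    qed
    then show "Z N L (A @ rev [l..m] @ [m] @ B)" using r1 by (metis append.assoc)
    have r2: "[l] @ rev [l..m] = [l, m] @ rev [l..m - 1]" using upto_rec2[OF lm] by simp
    have "Z N L (A @ [l, m] @ (rev [l..m - 1] @ B))"
    proof (rule step[OF N L lm])
      fix a b assume "l < a" "a \<le> m" "l \<le> b" "b < m"
      then have "Z N L ((A @ [a]) @ [b] @ rev [l..m - 1] @ B)" using dl by (intro D2) simp_all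
      then show "Z N L (A @ [a, b] @ rev [l..m - 1] @ B)" by simp
    qed
    then show "Z N L (A @ [l] @ rev [l..m] @ B)" using r2 by (metis append.assoc)
  qed
qed

theorem mainTheorem2:
  fixes N L :: nat and l m :: int
  assumes "1 \<le> N" and "1 \<le> L" and "l \<le> m"
  shows "wedge_zero N L (rev [l..m] @ [m]) \<and> wedge_zero N L (l # rev [l..m])"
proof -
  have "m - l = int (nat (m - l))" using assms(3) by simp
  then have "Z N L ([] @ rev [l..m] @ [m] @ []) \<and> Z N L ([] @ [l] @ rev [l..m] @ [])"
    using main_ind[OF assms(1,2), of "nat (m - l)"] by blast
  then show ?thesis using wedge_from_J by simp
qed


end
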